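(* Let $X$ be a Banach space and $f_k:X\to\mathbb{R}\cup\{+\infty\}$ $(k\in\mathbb{N}\cup\{0\})$ proper convex functions such that the set $C:=\operatorname{dom}f_0\cap\{x\in X: f_k(x)\le0\ \forall k\in\mathbb{N}\}$ is nonempty. Consider the problem (P): minimize $f_0(x)$ subject to $f_k(x)\le0$ $(k\in\mathbb{N})$, with optimal value $v(\mathrm{P})$, and the dual problems (D) and (D$_m$) defined in the context. Suppose $v(\mathrm{P})>-\infty$. Then for every $m=0,1,\ldots$, $$(\operatorname{cl}v)(0)\le v(\mathrm{D})\le v(\mathrm{D}_m)\le v(\mathrm{P}).$$ If, additionally, the Slater condition holds, i.e., there exists $x\in\operatorname{dom}f_0$ with $\sup_{k\in\mathbb{N}}f_k(x)<0$, then $v(\mathrm{P})=v(\mathrm{D})=v(\mathrm{D}_m)$ for every $m=0,1,\ldots$, and both (D) and (D$_m$) have solutions (the suprema defining them are attained). Moreover, in this case, if $\lambda=(\lambda_1,\lambda_2,\ldots)\in\ell^1_+$, $\lambda_\infty\in\mathbb{R}_+$ is a solution of (D), then $$\hat\lambda:=(\lambda_1,\ldots,\lambda_m,\lambda_{m+1}+\lambda_\infty+\alpha,\lambda_{m+2}+\lambda_\infty+\alpha,\ldots)$$ is a solution of (D$_m$), where $\alpha=0$ if $\lambda_\infty>0$ and $\alpha=1$ otherwise.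
   Context: Conventions: $0\cdot(+\infty)=+\infty$, $(+\infty)-(+\infty)=+\infty$, $\inf\emptyset=+\infty$. $\ell^1_+$ and $\ell^\infty_+$ are the sets of sequences in $\ell^1$, resp. $\ell^\infty$, with nonnegative entries; $\mathbb{R}_+=[0,+\infty)$. The value function is $v(\varepsilon):=\inf\{f_0(x): f_k(x)\le\varepsilon\ \forall k\in\mathbb{N}\}$ for $\varepsilon\in\mathbb{R}$, so $v(\mathrm{P})=v(0)$; $\operatorname{cl}v$ is its lower semicontinuous envelope (largest lower semicontinuous function majorized by $v$). Let $f_\infty(x):=\limsup_{k\to\infty}f_k(x)$ and $f_k^+:=\max\{f_k,0\}$. For $x\in X$, $\lambda\in\ell^1_+$, $\lambda_\infty\ge0$: $L(x,\lambda,\lambda_\infty):=f_0(x)+\overline{\sum_{k\in\mathbb{N}}}\lambda_kf_k(x)+\lambda_\infty f_\infty(x)$, where $\overline{\sum_{k\in\mathbb{N}}}\lambda_kf_k(x):=\limsup_{n\to\infty}\sum_{k=1}^n\lambda_kf_k(x)$. For $m\in\{0,1,\ldots\}$ and $\lambda\in\ell^\infty_+$: $L_m(x,\lambda):=f_0(x)+\sum_{k=1}^m\lambda_kf_k(x)+\sum_{k=m+1}^{\infty}\lambda_kf_k^+(x)$ (the first sum is $0$ when $m=0$). (D) is the problem $\sup_{\lambda\in\ell^1_+,\lambda_\infty\in\mathbb{R}_+}\inf_{x\in X}L(x,\lambda,\lambda_\infty)$ with value $v(\mathrm{D})$; (D$_m$) is $\sup_{\lambda\in\ell^\infty_+}\inf_{x\in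 X}L_m(x,\lambda)$ with value $v(\mathrm{D}_m)$. A solution of a dual problem is a point where its supremum is attained. *)

theory Defs
  imports "HOL-Analysis.Analysis"
begin

text \<open>Multiplication of a nonnegative real by an extended real with the convention
  0 * (+inf) = +inf.\<close>
definition emul :: "real \<Rightarrow> ereal \<Rightarrow> ereal" where
  "emul c a = (if a = \<infinity> then \<infinity> else ereal c * a)"

definition proper_convex :: "('a::real_vector \<Rightarrow> ereal) \<Rightarrow> bool" where
  "proper_convex g \<longleftrightarrow> (\<forall>x. g x \<noteq> -\<infinity>) \<and> (\<exists>x. g x \<noteq> \<infinity>) \<and>
     (\<forall>x y t. 0 < t \<and> t < 1 \<longrightarrow>
        g ((1 - t) *\<^sub>R x + t *\<^sub>R y) \<le> ereal (1 - t) * g x + ereal t * g y)"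

definition valfun :: "(nat \<Rightarrow> 'a \<Rightarrow> ereal) \<Rightarrow> real \<Rightarrow> ereal" where
  "valfun f \<epsilon> = Inf {f 0 x | x. \<forall>k\<ge>1. f k x \<le> ereal \<epsilon>}"

definition lsc :: "(real \<Rightarrow> ereal) \<Rightarrow> bool" where
  "lsc g \<longleftrightarrow> (\<forall>x. g x \<le> Liminf (at x) g)"

definition lsc_hull :: "(real \<Rightarrow> ereal) \<Rightarrow> real \<Rightarrow> ereal" where
  "lsc_hull v x = Sup {g x | g. lsc g \<and> (\<forall>y. g y \<le> v y)}"

definition f_inf :: "(nat \<Rightarrow> 'a \<Rightarrow> ereal) \<Rightarrow> 'a \<Rightarrow> ereal" where
  "f_inf f x = limsup (%k. f k x)"

definition ell1_plus :: "(nat \<Rightarrow> real) \<Rightarrow> bool" where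
  "ell1_plus l \<longleftrightarrow> (\<forall>k. 0 \<le> l k) \<and> summable l"

definition ellinf_plus :: "(nat \<Rightarrow> real) \<Rightarrow> bool" where
  "ellinf_plus l \<longleftrightarrow> (\<forall>k. 0 \<le> l k) \<and> bounded (range l)"

text \<open>Lagrangian L(x, lambda, lambda_inf); lambda is indexed by k >= 1 (lambda 0 is unused).\<close>
definition lagr :: "(nat \<Rightarrow> 'a \<Rightarrow> ereal) \<Rightarrow> 'a \<Rightarrow> (nat \<Rightarrow> real) \<Rightarrow> real \<Rightarrow> ereal" where
  "lagr f x l linf = f 0 x + limsup (%n. \<Sum>k=1..n. emul (l k) (f k x))
      + emul linf (f_inf f x)"

definition lagr_m :: "(nat \<Rightarrow> 'a \<Rightarrow> ereal) \<Rightarrow> nat \<Rightarrow> 'a \<Rightarrow> (nat \<Rightarrow> real) \<Rightarrow> ereal" where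
  "lagr_m f m x l = f 0 x + (\<Sum>k=1..m. emul (l k) (f k x))
      + (\<Sum>k. if m < k then emul (l k) (max (f k x) 0) else 0)"

definition vD :: "(nat \<Rightarrow> 'a \<Rightarrow> ereal) \<Rightarrow> ereal" where
  "vD f = (SUP p \<in> {(l, linf). ell1_plus l \<and> 0 \<le> linf}.
              INF x. lagr f x (fst p) (snd p))"

definition vDm :: "(nat \<Rightarrow> 'a \<Rightarrow> ereal) \<Rightarrow> nat \<Rightarrow> ereal" where
  "vDm f m = (SUP l \<in> {l. ellinf_plus l}. INF x. lagr_m f m x l)"

definition solD :: "(nat \<Rightarrow> 'a \<Rightarrow> ereal) \<Rightarrow> (nat \<Rightarrow> real) \<Rightarrow> real \<Rightarrow> bool" where
  "solD f l linf \<longleftrightarrow> ell1_plus l \<and> 0 \<le> linf \<and> (INF x. lagr f x l linf) = vD f"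

definition solDm :: "(nat \<Rightarrow> 'a \<Rightarrow> ereal) \<Rightarrow> nat \<Rightarrow> (nat \<Rightarrow> real) \<Rightarrow> bool" where
  "solDm f m l \<longleftrightarrow> ellinf_plus l \<and> (INF x. lagr_m f m x l) = vDm f m"

end

theory Submission
  imports Defs
begin


definition cvxf :: "(nat \<Rightarrow> real) set \<Rightarrow> bool" where
  "cvxf K \<longleftrightarrow> (\<forall>w\<in>K. \<forall>w'\<in>K. \<forall>t::real. 0 \<le> t \<and> t \<le> 1 \<longrightarrow> (\<lambda>k. (1-t) * w k + t * w' k) \<in> K)"

locale mm =
  fixes D :: "'x::real_vector set" and K0 :: "(nat \<Rightarrow> real) set"
    and G :: "nat \<Rightarrow> 'x \<Rightarrow> (nat \<Rightarrow> real) \<Rightarrow> real"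
  assumes K0c: "compact K0"
    and Dne: "D \<noteq> {}"
    and cont: "\<And>N x. x \<in> D \<Longrightarrow> continuous_on UNIV (G N x)"
    and mono: "\<And>N x w. x \<in> D \<Longrightarrow> w \<in> K0 \<Longrightarrow> G (Suc N) x w \<le> G N x w"
    and cvx: "\<And>x y t. x \<in> D \<Longrightarrow> y \<in> D \<Longrightarrow> 0 < t \<Longrightarrow> t < 1 \<Longrightarrow> (1-t) *\<^sub>R x + t *\<^sub>R y \<in> D"
    and cvxG: "\<And>x y t N w. x \<in> D \<Longrightarrow> y \<in> D \<Longrightarrow> 0 < t \<Longrightarrow> t < 1 \<Longrightarrow> w \<in> K0 \<Longrightarrow>
        G N ((1-t) *\<^sub>R x + t *\<^sub>R y) w \<le> (1-t) * G N x w + t * G N y w"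
    and ccvG: "\<And>N x w w' t. x \<in> D \<Longrightarrow> w \<in> K0 \<Longrightarrow> w' \<in> K0 \<Longrightarrow> 0 \<le> t \<Longrightarrow> t \<le> 1 \<Longrightarrow>
        (1-t) * G N x w + t * G N x w' \<le> G N x (\<lambda>k. (1-t) * w k + t * w' k)"
begin

lemma mono_le:
  assumes "x \<in> D" "w \<in> K0" "N \<le> M" shows "G M x w \<le> G N x w"
  using assms(3)
proof (induction M rule: dec_induct)
  case base show ?case by simp
next
  case (step m) then show ?case using mono[OF assms(1,2), of m] by linarith
qed

lemma margin:
  assumes K: "compact K" and I: "I \<subseteq> D"
    and cov: "\<forall>w\<in>K. \<exists>x\<in>I. \<exists>N. G N x w < c"
  shows "\<exists>F. F \<subseteq> I \<and> finite F \<and> (\<exists>c'<c. \<forall>w\<in>K. \<exists>x\<in>F. \<exists>N. G N x w < c')"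
proof -
  define U where "U = (\<lambda>(x,N,n::nat). {w. G N x w < c - 1 / real (Suc n)})"
  have op: "open (U T)" if "T \<in> I \<times> UNIV \<times> UNIV" for T
  proof -
    obtain x N n where T: "T = (x,N,n)" by (cases T) auto
    with that I have "x \<in> D" by auto
    then show ?thesis unfolding U_def T
      by (auto intro!: open_Collect_less cont continuous_intros)
  qed
  have sub: "K \<subseteq> (\<Union>T\<in>I \<times> UNIV \<times> UNIV. U T)"
  proof
    fix w assume "w \<in> K"
    with cov obtain x N where x: "x \<in> I" "G N x w < c" by auto
    then obtain n where "inverse (real (Suc n)) < c - G N x w"
      using reals_Archimedean[of "c - G N x w"] by auto
    then have "1 / real (Suc n) < c - G N x w" by (simp add: inverse_eq_divide)
    then have "w \<in> U (x,N,n)" unfolding U_def by auto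
    with x show "w \<in> (\<Union>T\<in>I \<times> UNIV \<times> UNIV. U T)" by blast
  qed
  obtain C' where C': "C' \<subseteq> I \<times> UNIV \<times> UNIV" "finite C'" "K \<subseteq> (\<Union>c\<in>C'. U c)"
    using compactE_image[OF K op sub] by blast
  define M where "M = Max ((\<lambda>T. snd (snd T)) ` C')"
  define F where "F = fst ` C'"
  have "F \<subseteq> I" "finite F" using C' unfolding F_def by auto
  moreover have "\<forall>w\<in>K. \<exists>x\<in>F. \<exists>N. G N x w < c - 1 / real (Suc M)"
  proof
    fix w assume "w \<in> K"
    with C' obtain T where T: "T \<in> C'" "w \<in> U T" by blast
    obtain x N n where TT: "T = (x,N,n)" by (cases T) auto
    have "n \<le> M" unfolding M_def using T C'(2) TT
      by (metis Max_ge finite_imageI image_eqI snd_conv)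
    then have "1 / real (Suc M) \<le> 1 / real (Suc n)"
      by (simp add: frac_le)
    moreover have "G N x w < c - 1 / real (Suc n)" using T TT unfolding U_def by auto
    ultimately show "\<exists>x\<in>F. \<exists>N. G N x w < c - 1 / real (Suc M)"
      using T TT unfolding F_def by (metis fst_conv image_eqI less_le_trans diff_left_mono)
  qed
  moreover have "c - 1 / real (Suc M) < c" by simp
  ultimately show ?thesis by blast
qed

lemma bounded_G0:
  assumes "compact K" "K \<subseteq> K0" "x \<in> D"
  shows "\<exists>B. \<forall>w\<in>K. \<forall>N. G N x w \<le> B"
proof -
  have "compact (G 0 x ` K)"
    using assms by (intro compact_continuous_image continuous_on_subset[OF cont]) auto
  then obtain B where B: "\<forall>y\<in>G 0 x ` K. y \<le> B"
    using compact_imp_bounded bounded_imp_bdd_above bdd_above_def by metis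
  show ?thesis
  proof (intro exI ballI allI)
    fix w N assume "w \<in> K"
    then show "G N x w \<le> B" using B mono_le[OF assms(3), of w 0 N] assms(2) by force
  qed
qed

lemma two:
  assumes K: "compact K" "K \<subseteq> K0" "cvxf K" and x1: "x1 \<in> D" and x2: "x2 \<in> D"
    and cov: "\<forall>w\<in>K. (\<exists>N. G N x1 w < c) \<or> (\<exists>N. G N x2 w < c)"
  shows "\<exists>z\<in>D. \<forall>w\<in>K. \<exists>N. G N z w < c"
proof -
  have "\<forall>w\<in>K. \<exists>x\<in>{x1,x2}. \<exists>N. G N x w < c" using cov by auto
  then obtain F c' where F: "F \<subseteq> {x1,x2}" and c': "c' < c" "\<forall>w\<in>K. \<exists>x\<in>F. \<exists>N. G N x w < c'"
    using margin[OF K(1), of "{x1,x2}" c] x1 x2 by blast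
  have cov': "\<forall>w\<in>K. (\<exists>N. G N x1 w < c') \<or> (\<exists>N. G N x2 w < c')" using c'(2) F by blast
  obtain B1 where B1: "\<forall>w\<in>K. \<forall>N. G N x1 w \<le> B1" using bounded_G0[OF K(1,2) x1] by blast
  obtain B2 where B2: "\<forall>w\<in>K. \<forall>N. G N x2 w \<le> B2" using bounded_G0[OF K(1,2) x2] by blast
  define B where "B = max B1 B2"
  have BB: "\<forall>w\<in>K. \<forall>N. G N x1 w \<le> B \<and> G N x2 w \<le> B" using B1 B2 unfolding B_def by (meson max.coboundedI1 max.coboundedI2)
  define A where "A = {p::real\<times>real. \<exists>w\<in>K. \<forall>N. fst p \<le> G N x1 w \<and> snd p \<le> G N x2 w}"
  define T where "T = {p::real\<times>real. c' \<le> fst p \<and> c' \<le> snd p}"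
  have convA: "convex A"
  proof (rule convexI)
    fix p q :: "real \<times> real" and u v :: real
    assume p: "p \<in> A" and q: "q \<in> A" and uv0: "0 \<le> u" "0 \<le> v" "u + v = 1"
    have uv: "0 \<le> u \<and> 0 \<le> v \<and> u + v = 1" using uv0 by auto
    from p obtain w where w: "w \<in> K" "\<forall>N. fst p \<le> G N x1 w \<and> snd p \<le> G N x2 w" unfolding A_def by auto
    from q obtain w' where w': "w' \<in> K" "\<forall>N. fst q \<le> G N x1 w' \<and> snd q \<le> G N x2 w'" unfolding A_def by auto
    have u: "u = 1 - v" using uv by simp
    have wc: "(\<lambda>k. (1-v) * w k + v * w' k) \<in> K" using K(3) w(1) w'(1) uv unfolding cvxf_def by auto
    have "\<forall>N. fst (u *\<^sub>R p + v *\<^sub>R q) \<le> G N x1 (\<lambda>k. (1-v) * w k + v * w' k)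
            \<and> snd (u *\<^sub>R p + v *\<^sub>R q) \<le> G N x2 (\<lambda>k. (1-v) * w k + v * w' k)"
    proof
      fix N
      have a1: "(1-v) * fst p + v * fst q \<le> (1-v) * G N x1 w + v * G N x1 w'"
        using w(2) w'(2) uv by (intro add_mono mult_left_mono) auto
      have a2: "(1-v) * snd p + v * snd q \<le> (1-v) * G N x2 w + v * G N x2 w'"
        using w(2) w'(2) uv by (intro add_mono mult_left_mono) auto
      have b1: "(1-v) * G N x1 w + v * G N x1 w' \<le> G N x1 (\<lambda>k. (1-v) * w k + v * w' k)"
        using ccvG[OF x1, of w w' v N] w(1) w'(1) K(2) uv by auto
      have b2: "(1-v) * G N x2 w + v * G N x2 w' \<le> G N x2 (\<lambda>k. (1-v) * w k + v * w' k)"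
        using ccvG[OF x2, of w w' v N] w(1) w'(1) K(2) uv by auto
      show "fst (u *\<^sub>R p + v *\<^sub>R q) \<le> G N x1 (\<lambda>k. (1-v) * w k + v * w' k)
            \<and> snd (u *\<^sub>R p + v *\<^sub>R q) \<le> G N x2 (\<lambda>k. (1-v) * w k + v * w' k)"
        using a1 a2 b1 b2 u by simp
    qed
    with wc show "u *\<^sub>R p + v *\<^sub>R q \<in> A" unfolding A_def by blast
  qed
  have convT: "convex T"
  proof (rule convexI)
    fix p q :: "real \<times> real" and u v :: real
    assume hp: "p \<in> T" and hq: "q \<in> T" and huv0: "0 \<le> u" "0 \<le> v" "u + v = 1"
    have huv: "0 \<le> u \<and> 0 \<le> v \<and> u + v = 1" using huv0 by auto
    have h: "c' \<le> fst p" "c' \<le> snd p" "c' \<le> fst q" "c' \<le> snd q" "0 \<le> u" "0 \<le> v" "u + v = 1"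
      using hp hq huv unfolding T_def by auto
    have "u * c' + v * c' \<le> u * fst p + v * fst q" using h by (intro add_mono mult_left_mono) auto
    moreover have "u * c' + v * c' \<le> u * snd p + v * snd q" using h by (intro add_mono mult_left_mono) auto
    moreover have "u * c' + v * c' = c'" using h(7) by (metis distrib_right mult_1)
    ultimately show "u *\<^sub>R p + v *\<^sub>R q \<in> T" unfolding T_def by auto
  qed
  have disj: "A \<inter> T = {}"
  proof (rule ccontr)
    assume "A \<inter> T \<noteq> {}"
    then obtain p w where "w \<in> K" "\<forall>N. fst p \<le> G N x1 w \<and> snd p \<le> G N x2 w" "c' \<le> fst p" "c' \<le> snd p"
      unfolding A_def T_def by auto
    note h = this
    from cov' h(1) have "(\<exists>N. G N x1 w < c') \<or> (\<exists>N. G N x2 w < c')" by blast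
    then show False
    proof (elim disjE exE)
      fix N assume "G N x1 w < c'" then show False using h(2,3) by (meson le_less_trans order_less_irrefl order_trans)
    next
      fix N assume "G N x2 w < c'" then show False using h(2,4) by (meson le_less_trans order_less_irrefl order_trans)
    qed
  qed
  show ?thesis
  proof (cases "A = {}")
    case True
    define z where "z = (1 - 1/2) *\<^sub>R x1 + (1/2::real) *\<^sub>R x2"
    have zD: "z \<in> D" unfolding z_def using cvx[OF x1 x2, of "1/2"] by simp
    have "\<forall>w\<in>K. \<exists>N. G N z w < c"
    proof (intro ballI, rule ccontr)
      fix w assume w: "w \<in> K" and nc: "\<not> (\<exists>N. G N z w < c)"
      have "\<forall>N. 2*c - B \<le> G N x1 w \<and> 2*c - B \<le> G N x2 w"
      proof
        fix N
        have "c \<le> G N z w" using nc by (meson not_le)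
        also have "\<dots> \<le> (1 - 1/2) * G N x1 w + (1/2) * G N x2 w"
          unfolding z_def using cvxG[OF x1 x2, of "1/2" w N] w K(2) by auto
        finally have "c \<le> (1 - 1/2) * G N x1 w + (1/2) * G N x2 w" .
        moreover have "G N x1 w \<le> B" "G N x2 w \<le> B" using BB w by auto
        ultimately show "2*c - B \<le> G N x1 w \<and> 2*c - B \<le> G N x2 w" by (auto simp: field_simps)
      qed
      then have "(2*c - B, 2*c - B) \<in> A" unfolding A_def using w by auto
      with True show False by auto
    qed
    with zD show ?thesis by blast
  next
    case False
    have "T \<noteq> {}" unfolding T_def by auto
    then obtain a b where ab: "a \<noteq> 0" "\<forall>p\<in>A. inner a p \<le> b" "\<forall>p\<in>T. b \<le> inner a p"
      using separating_hyperplane_sets[OF convA convT False _ disj] by blast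
    obtain a1 a2 where a: "a = (a1, a2)" by (cases a) auto
    have inn: "inner a p = a1 * fst p + a2 * snd p" for p
      unfolding a by (cases p) (simp add: inner_Pair)
    have a1: "0 \<le> a1"
    proof (rule ccontr)
      assume n: "\<not> 0 \<le> a1"
      define s where "s = (\<bar>b - a1*c' - a2*c'\<bar> + 1) / (- a1)"
      have s0: "0 \<le> s" using n unfolding s_def by (intro divide_nonneg_pos) auto
      have as: "a1 * s = - (\<bar>b - a1*c' - a2*c'\<bar> + 1)" using n unfolding s_def by (simp add: field_simps)
      have "(c' + s, c') \<in> T" using s0 unfolding T_def by auto
      then have "b \<le> a1 * (c' + s) + a2 * c'" using ab(3) inn by auto
      also have "\<dots> = a1*c' + a2*c' - (\<bar>b - a1*c' - a2*c'\<bar> + 1)" using as by (simp add: algebra_simps)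
      finally show False by linarith
    qed
    have a2: "0 \<le> a2"
    proof (rule ccontr)
      assume n: "\<not> 0 \<le> a2"
      define s where "s = (\<bar>b - a1*c' - a2*c'\<bar> + 1) / (- a2)"
      have s0: "0 \<le> s" using n unfolding s_def by (intro divide_nonneg_pos) auto
      have as: "a2 * s = - (\<bar>b - a1*c' - a2*c'\<bar> + 1)" using n unfolding s_def by (simp add: field_simps)
      have "(c', c' + s) \<in> T" using s0 unfolding T_def by auto
      then have "b \<le> a1 * c' + a2 * (c' + s)" using ab(3) inn by auto
      also have "\<dots> = a1*c' + a2*c' - (\<bar>b - a1*c' - a2*c'\<bar> + 1)" using as by (simp add: algebra_simps)
      finally show False by linarith
    qed
    define S where "S = a1 + a2"
    have S0: "0 < S" using a1 a2 ab(1) a unfolding S_def by (metis add_nonneg_nonneg add_nonneg_eq_0_iff antisym_conv1 zero_prod_def)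
    have "(c', c') \<in> T" unfolding T_def by auto
    then have bS: "b \<le> S * c'" using ab(3) inn unfolding S_def by (force simp: algebra_simps)
    define q where "q = \<bar>B - c\<bar> + 1"
    have q0: "0 < q" unfolding q_def by (smt (verit) abs_ge_zero)
    define e where "e = S * (c - c') / (2 * q)"
    have e0: "0 < e" unfolding e_def using S0 c'(1) q0 by (intro divide_pos_pos mult_pos_pos) auto
    have eB: "2 * e * (B - c) < S * (c - c')"
    proof -
      have "2 * e * q = S * (c - c')" unfolding e_def using q0 by (simp add: field_simps)
      moreover have "2 * e * (B - c) < 2 * e * q" unfolding q_def using e0 by (intro mult_strict_left_mono) auto
      ultimately show ?thesis by linarith
    qed
    define t where "t = (a2 + e) / (S + 2*e)"
    have t0: "0 < t" unfolding t_def using a2 e0 S0 by auto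
    have t1: "t < 1" unfolding t_def using a1 e0 S0 unfolding S_def by (auto simp: field_simps)
    have key: "(1-t) * y1 + t * y2 < c" if y: "a1 * y1 + a2 * y2 \<le> b" "y1 \<le> B" "y2 \<le> B" for y1 y2
    proof -
      have d: "S + 2*e \<noteq> 0" using S0 e0 by simp
      have t1': "1 - t = (a1+e)/(S+2*e)" unfolding t_def S_def using d unfolding S_def by (simp add: field_simps)
      have "(1-t) * y1 + t * y2 = (a1+e)/(S+2*e) * y1 + (a2+e)/(S+2*e) * y2"
        unfolding t1' unfolding t_def by simp
      also have "\<dots> = ((a1+e) * y1 + (a2+e) * y2) / (S + 2*e)"
        by (simp only: add_divide_distrib[symmetric] times_divide_eq_left)
      also have "\<dots> = (a1 * y1 + a2 * y2 + e * (y1 + y2)) / (S + 2*e)"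
        by (simp add: algebra_simps)
      also have "\<dots> \<le> (S * c' + e * (2 * B)) / (S + 2*e)"
        using y bS e0 S0 by (intro divide_right_mono add_mono mult_left_mono) auto
      also have "\<dots> < c"
        using S0 e0 eB by (simp add: field_simps)
      finally show ?thesis .
    qed
    define z where "z = (1-t) *\<^sub>R x1 + t *\<^sub>R x2"
    have zD: "z \<in> D" unfolding z_def using cvx[OF x1 x2 t0 t1] .
    have "\<forall>w\<in>K. \<exists>N. G N z w < c"
    proof (intro ballI, rule ccontr)
      fix w assume w: "w \<in> K" and nc: "\<not> (\<exists>N. G N z w < c)"
      have cz: "c \<le> (1-t) * G N x1 w + t * G N x2 w" for N
      proof -
        have "c \<le> G N z w" using nc by (meson not_le)
        also have "\<dots> \<le> (1-t) * G N x1 w + t * G N x2 w"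
          unfolding z_def using cvxG[OF x1 x2 t0 t1, of w N] w K(2) by auto
        finally show ?thesis .
      qed
      have lb1: "(c - t * B) / (1-t) \<le> G N x1 w" for N
      proof -
        have "c - t * B \<le> (1-t) * G N x1 w" using cz[of N] BB w t0
          by (smt (verit, ccfv_SIG) mult_left_mono)
        then show ?thesis using t1 by (simp add: divide_le_eq mult.commute)
      qed
      have lb2: "(c - (1-t) * B) / t \<le> G N x2 w" for N
      proof -
        have "c - (1-t) * B \<le> t * G N x2 w" using cz[of N] BB w t1
          by (smt (verit, ccfv_SIG) mult_left_mono)
        then show ?thesis using t0 by (simp add: divide_le_eq mult.commute)
      qed
      define y1 where "y1 = Inf (range (\<lambda>N. G N x1 w))"
      define y2 where "y2 = Inf (range (\<lambda>N. G N x2 w))"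
      have bb1: "bdd_below (range (\<lambda>N. G N x1 w))" using lb1 by (intro bdd_belowI[of _ "(c - t*B)/(1-t)"]) auto
      have bb2: "bdd_below (range (\<lambda>N. G N x2 w))" using lb2 by (intro bdd_belowI[of _ "(c - (1-t)*B)/t"]) auto
      have y1l: "y1 \<le> G N x1 w" for N unfolding y1_def using bb1 by (auto intro: cInf_lower)
      have y2l: "y2 \<le> G N x2 w" for N unfolding y2_def using bb2 by (auto intro: cInf_lower)
      have "(y1, y2) \<in> A" unfolding A_def using w y1l y2l by auto
      then have "a1 * y1 + a2 * y2 \<le> b" using ab(2) inn by force
      moreover have "y1 \<le> B" using y1l[of 0] BB w by (meson order_trans)
      moreover have "y2 \<le> B" using y2l[of 0] BB w by (meson order_trans)
      ultimately have lt: "(1-t) * y1 + t * y2 < c" using key by blast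
      define \<eta> where "\<eta> = c - ((1-t) * y1 + t * y2)"
      have \<eta>0: "0 < \<eta>" using lt unfolding \<eta>_def by simp
      obtain N1 where N1: "G N1 x1 w < y1 + \<eta>"
        using cInf_lessD[of "range (\<lambda>N. G N x1 w)" "y1 + \<eta>"] \<eta>0 unfolding y1_def by auto
      obtain N2 where N2: "G N2 x2 w < y2 + \<eta>"
        using cInf_lessD[of "range (\<lambda>N. G N x2 w)" "y2 + \<eta>"] \<eta>0 unfolding y2_def by auto
      define N where "N = max N1 N2"
      have "G N x1 w < y1 + \<eta>" using mono_le[OF x1, of w N1 N] N1 w K(2) unfolding N_def by auto
      moreover have "G N x2 w < y2 + \<eta>" using mono_le[OF x2, of w N2 N] N2 w K(2) unfolding N_def by auto
      ultimately have "(1-t) * G N x1 w + t * G N x2 w < (1-t) * (y1 + \<eta>) + t * (y2 + \<eta>)"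
        using t0 t1 by (intro add_strict_mono mult_strict_left_mono) auto
      also have "\<dots> = c" unfolding \<eta>_def by (simp add: algebra_simps)
      finally show False using cz[of N] by simp
    qed
    with zD show ?thesis by blast
  qed
qed

lemma claim:
  assumes "finite F" "F \<subseteq> D"
  shows "\<forall>K. K \<subseteq> K0 \<longrightarrow> compact K \<longrightarrow> cvxf K \<longrightarrow> (\<forall>w\<in>K. \<exists>x\<in>F. \<exists>N. G N x w < c)
           \<longrightarrow> (\<exists>z\<in>D. \<forall>w\<in>K. \<exists>N. G N z w < c)"
  using assms
proof (induction F rule: finite_induct)
  case empty
  then show ?case using Dne by auto
next
  case (insert x F)
  show ?case
  proof (intro allI impI)
    fix K assume K: "K \<subseteq> K0" "compact K" "cvxf K" and cov: "\<forall>w\<in>K. \<exists>y\<in>insert x F. \<exists>N. G N y w < c"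
    have xD: "x \<in> D" using insert by auto
    define K' where "K' = K \<inter> (\<Inter>N. {w. c \<le> G N x w})"
    have cl: "closed (\<Inter>N. {w. c \<le> G N x w})"
      using xD by (intro closed_INT ballI closed_Collect_le continuous_on_const cont)
    have K'c: "compact K'" unfolding K'_def using K(2) cl by (rule compact_Int_closed)
    have K'v: "cvxf K'" unfolding cvxf_def
    proof (intro ballI allI impI)
      fix w w' and t :: real assume w: "w \<in> K'" "w' \<in> K'" and t: "0 \<le> t \<and> t \<le> 1"
      have "(\<lambda>k. (1-t) * w k + t * w' k) \<in> K" using K(3) w t unfolding cvxf_def K'_def by auto
      moreover have "c \<le> G N x (\<lambda>k. (1-t) * w k + t * w' k)" for N
      proof -
        have "c = (1-t) * c + t * c" by (simp add: algebra_simps)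
        also have "\<dots> \<le> (1-t) * G N x w + t * G N x w'"
          using w t unfolding K'_def by (intro add_mono mult_left_mono) auto
        also have "\<dots> \<le> G N x (\<lambda>k. (1-t) * w k + t * w' k)"
          using ccvG[OF xD, of w w' t N] w t K(1) unfolding K'_def by auto
        finally show ?thesis .
      qed
      ultimately show "(\<lambda>k. (1-t) * w k + t * w' k) \<in> K'" unfolding K'_def by auto
    qed
    have "\<forall>w\<in>K'. \<exists>y\<in>F. \<exists>N. G N y w < c"
    proof
      fix w assume w: "w \<in> K'"
      then obtain y N where y: "y \<in> insert x F" "G N y w < c" using cov unfolding K'_def by blast
      have "y \<noteq> x"
      proof
        assume "y = x"
        then have "c \<le> G N y w" using w unfolding K'_def by blast
        with y(2) show False by simp
      qed
      with y show "\<exists>y\<in>F. \<exists>N. G N y w < c" by auto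
    qed
    moreover have "K' \<subseteq> K0" using K(1) unfolding K'_def by blast
    moreover have "F \<subseteq> D" using insert.prems by simp
    ultimately obtain z' where z': "z' \<in> D" "\<forall>w\<in>K'. \<exists>N. G N z' w < c"
      using insert.IH K'c K'v by blast
    have "\<forall>w\<in>K. (\<exists>N. G N z' w < c) \<or> (\<exists>N. G N x w < c)"
    proof
      fix w assume w: "w \<in> K"
      show "(\<exists>N. G N z' w < c) \<or> (\<exists>N. G N x w < c)"
      proof (cases "w \<in> K'")
        case True then show ?thesis using z' by blast
      next
        case False
        then obtain N where "\<not> c \<le> G N x w" using w unfolding K'_def by blast
        then show ?thesis by (simp add: not_le) blast
      qed
    qed
    then show "\<exists>z\<in>D. \<forall>w\<in>K. \<exists>N. G N z w < c"
      using two[OF K(2,1,3) z'(1) xD] by blast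
  qed
qed

lemma main:
  assumes cv0: "cvxf K0"
    and hyp: "\<forall>x\<in>D. \<forall>r<\<rho>. \<exists>w\<in>K0. \<forall>N. r < G N x w"
  shows "\<exists>w\<in>K0. \<forall>x\<in>D. \<forall>N. \<rho> \<le> G N x w"
proof (rule ccontr)
  assume "\<not> ?thesis"
  then have "\<forall>w\<in>K0. \<exists>x\<in>D. \<exists>N. G N x w < \<rho>" by (auto simp: not_le)
  then obtain F c' where F: "F \<subseteq> D" "finite F" and c': "c' < \<rho>" "\<forall>w\<in>K0. \<exists>x\<in>F. \<exists>N. G N x w < c'"
    using margin[OF K0c, of D \<rho>] by blast
  obtain z where z: "z \<in> D" "\<forall>w\<in>K0. \<exists>N. G N z w < c'"
    using claim[OF F(2,1), of c'] K0c cv0 c'(2) by blast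
  obtain w where w: "w \<in> K0" "\<forall>N. c' < G N z w" using hyp z(1) c'(1) by blast
  from z(2) w(1) obtain N where "G N z w < c'" by blast
  with w(2) show False by (meson not_less_iff_gr_or_eq)
qed

end


lemma slater_mult:
  fixes A Phi :: "'x::real_vector \<Rightarrow> real"
  assumes cv: "\<And>x y t. x \<in> D \<Longrightarrow> y \<in> D \<Longrightarrow> 0 < t \<Longrightarrow> t < 1 \<Longrightarrow>
      (1-t) *\<^sub>R x + t *\<^sub>R y \<in> D \<and> A ((1-t) *\<^sub>R x + t *\<^sub>R y) \<le> (1-t) * A x + t * A y
      \<and> Phi ((1-t) *\<^sub>R x + t *\<^sub>R y) \<le> (1-t) * Phi x + t * Phi y"
    and xb: "xb \<in> D" "Phi xb < \<beta>"
    and feas: "\<And>x. x \<in> D \<Longrightarrow> Phi x \<le> \<beta> \<Longrightarrow> \<rho> \<le> A x"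
  shows "\<exists>\<mu>\<ge>0. \<forall>x\<in>D. \<rho> \<le> A x + \<mu> * (Phi x - \<beta>)"
proof -
  have key: "(\<rho> - A y) / (Phi y - \<beta>) \<le> (A x - \<rho>) / (\<beta> - Phi x)"
    if y: "y \<in> D" "\<beta> < Phi y" and x: "x \<in> D" "Phi x < \<beta>" for x y
  proof -
    define a where "a = Phi y - \<beta>"
    define b where "b = \<beta> - Phi x"
    have a0: "0 < a" and b0: "0 < b" using x y unfolding a_def b_def by auto
    define t where "t = b / (a + b)"
    have t0: "0 < t" and t1: "t < 1" unfolding t_def using a0 b0 by (auto simp: field_simps)
    have c: "(1-t) *\<^sub>R x + t *\<^sub>R y \<in> D" "A ((1-t) *\<^sub>R x + t *\<^sub>R y) \<le> (1-t) * A x + t * A y"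
       "Phi ((1-t) *\<^sub>R x + t *\<^sub>R y) \<le> (1-t) * Phi x + t * Phi y"
      using cv[OF x(1) y(1) t0 t1] by auto
    have omt: "1 - t = a / (a + b)" unfolding t_def using a0 b0 by (simp add: field_simps)
    have "(1-t) * Phi x + t * Phi y = (a * Phi x + b * Phi y) / (a + b)"
      unfolding omt unfolding t_def by (simp only: add_divide_distrib[symmetric] times_divide_eq_left)
    also have "a * Phi x + b * Phi y = (a + b) * \<beta>" unfolding a_def b_def by (simp add: algebra_simps)
    finally have "(1-t) * Phi x + t * Phi y = \<beta>" using a0 b0 by simp
    then have "\<rho> \<le> A ((1-t) *\<^sub>R x + t *\<^sub>R y)" using c feas by force
    also have "\<dots> \<le> (1-t) * A x + t * A y" by (rule c(2))
    also have "\<dots> = (a * A x + b * A y) / (a + b)"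
      unfolding omt unfolding t_def by (simp only: add_divide_distrib[symmetric] times_divide_eq_left)
    finally have "(a + b) * \<rho> \<le> a * A x + b * A y" using a0 b0 by (simp add: field_simps)
    then have "b * (\<rho> - A y) \<le> a * (A x - \<rho>)" by (simp add: algebra_simps)
    then show ?thesis unfolding a_def[symmetric] b_def[symmetric] using a0 b0
      by (simp add: divide_simps mult.commute)
  qed
  define P where "P = {(\<rho> - A y) / (Phi y - \<beta>) | y. y \<in> D \<and> \<beta> < Phi y}"
  define \<mu> where "\<mu> = (if P = {} then 0 else max 0 (Sup P))"
  have bddP: "bdd_above P"
    unfolding P_def using key[OF _ _ xb] by (auto intro!: bdd_aboveI[of _ "(A xb - \<rho>) / (\<beta> - Phi xb)"])
  have mu0: "0 \<le> \<mu>" unfolding \<mu>_def by auto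
  have "\<forall>x\<in>D. \<rho> \<le> A x + \<mu> * (Phi x - \<beta>)"
  proof
    fix x assume x: "x \<in> D"
    consider "\<beta> < Phi x" | "Phi x = \<beta>" | "Phi x < \<beta>" by linarith
    then show "\<rho> \<le> A x + \<mu> * (Phi x - \<beta>)"
    proof cases
      case 1
      then have "(\<rho> - A x) / (Phi x - \<beta>) \<in> P" unfolding P_def using x by auto
      then have "(\<rho> - A x) / (Phi x - \<beta>) \<le> \<mu>" unfolding \<mu>_def using bddP
        by (auto intro: cSup_upper le_max_iff_disj[THEN iffD2])
      then show ?thesis using 1 by (simp add: divide_le_eq algebra_simps)
    next
      case 2 then show ?thesis using feas x by simp
    next
      case 3
      have fx: "\<rho> \<le> A x" using feas x 3 by simp
      have "\<mu> \<le> (A x - \<rho>) / (\<beta> - Phi x)"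
      proof (cases "P = {}")
        case True then show ?thesis unfolding \<mu>_def using fx 3 by simp
      next
        case False
        have "Sup P \<le> (A x - \<rho>) / (\<beta> - Phi x)"
          using False by (intro cSup_least) (auto simp: P_def intro: key[OF _ _ x 3])
        then show ?thesis unfolding \<mu>_def using False fx 3 by simp
      qed
      then have "\<mu> * (\<beta> - Phi x) \<le> A x - \<rho>" using 3 by (simp add: le_divide_eq)
      then show ?thesis by (simp add: algebra_simps)
    qed
  qed
  with mu0 show ?thesis by blast
qed



definition D0 :: "(nat \<Rightarrow> 'a::real_vector \<Rightarrow> ereal) \<Rightarrow> 'a set" where
  "D0 f = {x. f 0 x < \<infinity> \<and> (SUP k\<in>{1..}. f k x) < \<infinity>}"
definition av :: "(nat \<Rightarrow> 'a \<Rightarrow> ereal) \<Rightarrow> nat \<Rightarrow> 'a \<Rightarrow> real" where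
  "av f k x = real_of_ereal (f k x)"
definition sv :: "(nat \<Rightarrow> 'a \<Rightarrow> ereal) \<Rightarrow> nat \<Rightarrow> 'a \<Rightarrow> real" where
  "sv f N x = (SUP k\<in>{N<..}. av f k x)"
definition Gf :: "(nat \<Rightarrow> 'a \<Rightarrow> ereal) \<Rightarrow> real \<Rightarrow> nat \<Rightarrow> 'a \<Rightarrow> (nat \<Rightarrow> real) \<Rightarrow> real" where
  "Gf f \<mu> N x w = av f 0 x + (\<Sum>k=1..N. w k * av f k x) + (\<mu> - (\<Sum>k=1..N. w k)) * sv f N x"
definition K0 :: "real \<Rightarrow> (nat \<Rightarrow> real) set" where
  "K0 \<mu> = {w. w 0 = 0 \<and> (\<forall>k. 0 \<le> w k) \<and> (\<forall>n. (\<Sum>k=1..n. w k) \<le> \<mu>)}"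

locale prob =
  fixes f :: "nat \<Rightarrow> 'a::real_vector \<Rightarrow> ereal"
  assumes proper: "\<And>k. proper_convex (f k)"
begin

lemma not_minf: "f k x \<noteq> -\<infinity>" using proper[of k] unfolding proper_convex_def by auto

lemma fconv: "0 < t \<Longrightarrow> t < 1 \<Longrightarrow> f k ((1 - t) *\<^sub>R x + t *\<^sub>R y) \<le> ereal (1 - t) * f k x + ereal t * f k y"
  using proper[of k] unfolding proper_convex_def by auto

definition bnd :: "'a \<Rightarrow> real" where "bnd x = real_of_ereal (SUP k\<in>{1..}. f k x)"

lemma D0_fin:
  assumes "x \<in> D0 f" shows "f k x = ereal (av f k x)"
proof -
  have "f k x < \<infinity>"
  proof (cases "k = 0")
    case True then show ?thesis using assms unfolding D0_def by auto
  next
    case False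
    then have "f k x \<le> (SUP k\<in>{1..}. f k x)" by (intro SUP_upper) auto
    then show ?thesis using assms unfolding D0_def by auto
  qed
  then show ?thesis unfolding av_def using not_minf[of k x] by (cases "f k x") auto
qed

lemma D0_bnd:
  assumes "x \<in> D0 f" "1 \<le> k" shows "av f k x \<le> bnd x"
proof -
  have le: "f k x \<le> (SUP k\<in>{1..}. f k x)" using assms(2) by (intro SUP_upper) auto
  have "f 1 x \<le> (SUP k\<in>{1..}. f k x)" by (intro SUP_upper) auto
  then have m: "(SUP k\<in>{1..}. f k x) \<noteq> -\<infinity>" using not_minf[of 1 x] by auto
  have p: "(SUP k\<in>{1..}. f k x) \<noteq> \<infinity>" using assms(1) unfolding D0_def by auto
  have "(SUP k\<in>{1..}. f k x) = ereal (bnd x)" unfolding bnd_def using m p by (cases "(SUP k\<in>{1..}. f k x)") auto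
  with le D0_fin[OF assms(1), of k] show ?thesis by simp
qed

lemma bdd_sv: "x \<in> D0 f \<Longrightarrow> bdd_above ((\<lambda>k. av f k x) ` {N<..})"
  using D0_bnd by (intro bdd_aboveI[of _ "bnd x"]) auto

lemma av_le_sv: "x \<in> D0 f \<Longrightarrow> N < k \<Longrightarrow> av f k x \<le> sv f N x"
  unfolding sv_def using bdd_sv by (intro cSUP_upper) auto

lemma sv_le_bnd: "x \<in> D0 f \<Longrightarrow> sv f N x \<le> bnd x"
  unfolding sv_def using D0_bnd by (intro cSUP_least) auto

lemma sv_mono: "x \<in> D0 f \<Longrightarrow> sv f (Suc N) x \<le> sv f N x"
  unfolding sv_def using bdd_sv by (intro cSUP_subset_mono) auto

lemma D0_conv:
  assumes x: "x \<in> D0 f" and y: "y \<in> D0 f" and t: "0 < t" "t < 1"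
  shows "(1-t) *\<^sub>R x + t *\<^sub>R y \<in> D0 f"
    and "\<And>k. av f k ((1-t) *\<^sub>R x + t *\<^sub>R y) \<le> (1-t) * av f k x + t * av f k y"
    and "\<And>N. sv f N ((1-t) *\<^sub>R x + t *\<^sub>R y) \<le> (1-t) * sv f N x + t * sv f N y"
proof -
  define z where "z = (1-t) *\<^sub>R x + t *\<^sub>R y"
  have fz: "f k z \<le> ereal ((1-t) * av f k x + t * av f k y)" for k
    using fconv[OF t, of k x y] D0_fin[OF x, of k] D0_fin[OF y, of k] unfolding z_def by simp
  have z0: "f 0 z < \<infinity>" by (rule order.strict_trans1[OF fz[of 0]]) simp
  have "(SUP k\<in>{1..}. f k z) \<le> ereal ((1-t) * bnd x + t * bnd y)"
  proof (rule SUP_least)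
    fix k :: nat assume "k \<in> {1..}"
    then have "(1-t) * av f k x + t * av f k y \<le> (1-t) * bnd x + t * bnd y"
      using D0_bnd[OF x, of k] D0_bnd[OF y, of k] t by (intro add_mono mult_left_mono) auto
    then show "f k z \<le> ereal ((1-t) * bnd x + t * bnd y)" using fz[of k] by (simp add: order_trans)
  qed
  then have "(SUP k\<in>{1..}. f k z) < \<infinity>" by (rule order.strict_trans1) simp
  then show zD: "(1-t) *\<^sub>R x + t *\<^sub>R y \<in> D0 f" using z0 unfolding D0_def z_def by auto
  show avz: "av f k ((1-t) *\<^sub>R x + t *\<^sub>R y) \<le> (1-t) * av f k x + t * av f k y" for k
    using fz[of k] D0_fin[OF zD, of k] unfolding z_def by simp
  show "sv f N ((1-t) *\<^sub>R x + t *\<^sub>R y) \<le> (1-t) * sv f N x + t * sv f N y" for N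
    unfolding sv_def[of f N "(1-t) *\<^sub>R x + t *\<^sub>R y"]
  proof (rule cSUP_least)
    show "{N<..} \<noteq> {}" by auto
    fix k assume "k \<in> {N<..}"
    then have "(1-t) * av f k x + t * av f k y \<le> (1-t) * sv f N x + t * sv f N y"
      using av_le_sv[OF x, of N k] av_le_sv[OF y, of N k] t by (intro add_mono mult_left_mono) auto
    then show "av f k ((1-t) *\<^sub>R x + t *\<^sub>R y) \<le> (1-t) * sv f N x + t * sv f N y"
      using avz[of k] by linarith
  qed
qed

end

lemma compact_box: "compact (Pi\<^sub>E UNIV (\<lambda>_::nat. {0..(m::real)}))"
proof -
  have "compactin (product_topology (\<lambda>_. euclidean) UNIV) (Pi\<^sub>E UNIV (\<lambda>_::nat. {0..(m::real)}))"
    by (simp add: compactin_PiE)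
  then show ?thesis by (simp add: euclidean_product_topology compactin_euclidean_iff)
qed

lemma coord_cont: "continuous_on UNIV (\<lambda>w::nat\<Rightarrow>real. w k)"
  by simp

lemma compact_K0: "0 \<le> \<mu> \<Longrightarrow> compact (K0 \<mu>)"
proof -
  assume mu: "0 \<le> \<mu>"
  have sub: "K0 \<mu> \<subseteq> Pi\<^sub>E UNIV (\<lambda>_::nat. {0..\<mu>})"
  proof
    fix w assume w: "w \<in> K0 \<mu>"
    have "w k \<le> \<mu>" for k
    proof (cases "k = 0")
      case True then show ?thesis using w mu unfolding K0_def by auto
    next
      case False
      then have "w k \<le> (\<Sum>j=1..k. w j)" using w unfolding K0_def
        by (intro member_le_sum) auto
      also have "\<dots> \<le> \<mu>" using w unfolding K0_def by auto
      finally show ?thesis .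
    qed
    then show "w \<in> Pi\<^sub>E UNIV (\<lambda>_::nat. {0..\<mu>})" using w unfolding K0_def by auto
  qed
  have eq: "K0 \<mu> = {w. w 0 = 0} \<inter> (\<Inter>k. {w. 0 \<le> w k}) \<inter> (\<Inter>n. {w. (\<Sum>k=1..n. w k) \<le> \<mu>})"
    unfolding K0_def by auto
  have cl: "closed (K0 \<mu>)" unfolding eq
    by (intro closed_Int closed_INT ballI closed_Collect_eq closed_Collect_le continuous_intros coord_cont)
  have "K0 \<mu> = Pi\<^sub>E UNIV (\<lambda>_::nat. {0..\<mu>}) \<inter> K0 \<mu>" using sub by blast
  moreover have "compact (Pi\<^sub>E UNIV (\<lambda>_::nat. {0..\<mu>}) \<inter> K0 \<mu>)"
    by (rule compact_Int_closed[OF compact_box cl])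
  ultimately show ?thesis by simp
qed

lemma cvxf_K0: "cvxf (K0 \<mu>)"
  unfolding cvxf_def
proof (intro ballI allI impI)
  fix w w' and t :: real assume w: "w \<in> K0 \<mu>" "w' \<in> K0 \<mu>" and t: "0 \<le> t \<and> t \<le> 1"
  have "(\<Sum>k=1..n. (1-t) * w k + t * w' k) \<le> \<mu>" for n
  proof -
    have "(\<Sum>k=1..n. (1-t) * w k + t * w' k) = (1-t) * (\<Sum>k=1..n. w k) + t * (\<Sum>k=1..n. w' k)"
      by (simp add: sum.distrib sum_distrib_left)
    also have "\<dots> \<le> (1-t) * \<mu> + t * \<mu>" using w t unfolding K0_def by (intro add_mono mult_left_mono) auto
    also have "\<dots> = \<mu>" by (simp add: algebra_simps)
    finally show ?thesis .
  qed
  then show "(\<lambda>k. (1-t) * w k + t * w' k) \<in> K0 \<mu>" using w t unfolding K0_def by auto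
qed

context prob begin

lemma Gf_cont: "continuous_on UNIV (Gf f \<mu> N x)"
  unfolding Gf_def by (intro continuous_intros coord_cont)

lemma Gf_mono:
  assumes x: "x \<in> D0 f" and w: "w \<in> K0 \<mu>"
  shows "Gf f \<mu> (Suc N) x w \<le> Gf f \<mu> N x w"
proof -
  have e: "Gf f \<mu> N x w - Gf f \<mu> (Suc N) x w = w (Suc N) * (sv f N x - av f (Suc N) x)
      + (\<mu> - (\<Sum>k=1..Suc N. w k)) * (sv f N x - sv f (Suc N) x)"
    by (simp add: Gf_def algebra_simps)
  have "0 \<le> w (Suc N) * (sv f N x - av f (Suc N) x)"
    using w av_le_sv[OF x, of N "Suc N"] unfolding K0_def by auto
  moreover have "0 \<le> (\<mu> - (\<Sum>k=1..Suc N. w k)) * (sv f N x - sv f (Suc N) x)"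
  proof (rule mult_nonneg_nonneg)
    from w have "\<forall>n. (\<Sum>k=1..n. w k) \<le> \<mu>" unfolding K0_def by blast
    then have "(\<Sum>k=1..Suc N. w k) \<le> \<mu>" by blast
    then show "0 \<le> \<mu> - (\<Sum>k=1..Suc N. w k)" by linarith
    show "0 \<le> sv f N x - sv f (Suc N) x" using sv_mono[OF x, of N] by linarith
  qed
  ultimately show ?thesis using e by linarith
qed

lemma Gf_cvx:
  assumes x: "x \<in> D0 f" and y: "y \<in> D0 f" and t: "0 < t" "t < 1" and w: "w \<in> K0 \<mu>"
  shows "Gf f \<mu> N ((1-t) *\<^sub>R x + t *\<^sub>R y) w \<le> (1-t) * Gf f \<mu> N x w + t * Gf f \<mu> N y w"
proof -
  define z where "z = (1-t) *\<^sub>R x + t *\<^sub>R y"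
  have eq: "(1-t) * Gf f \<mu> N x w + t * Gf f \<mu> N y w =
     ((1-t) * av f 0 x + t * av f 0 y) + (\<Sum>k=1..N. w k * ((1-t) * av f k x + t * av f k y))
     + (\<mu> - (\<Sum>k=1..N. w k)) * ((1-t) * sv f N x + t * sv f N y)"
  proof -
    have s1: "(\<Sum>k=1..N. w k * ((1-t) * av f k x + t * av f k y)) = (1-t) * (\<Sum>k=1..N. w k * av f k x) + t * (\<Sum>k=1..N. w k * av f k y)"
      unfolding sum_distrib_left sum.distrib[symmetric] by (rule sum.cong) (auto simp: algebra_simps)
    show ?thesis unfolding Gf_def s1 by (simp add: algebra_simps)
  qed
  have m: "0 \<le> \<mu> - (\<Sum>k=1..N. w k)" using w unfolding K0_def by auto
  have "Gf f \<mu> N z w \<le> ((1-t) * av f 0 x + t * av f 0 y) + (\<Sum>k=1..N. w k * ((1-t) * av f k x + t * av f k y))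
     + (\<mu> - (\<Sum>k=1..N. w k)) * ((1-t) * sv f N x + t * sv f N y)"
    unfolding Gf_def z_def
    using D0_conv[OF x y t] w m unfolding K0_def
    by (intro add_mono sum_mono mult_left_mono) auto
  then show ?thesis unfolding eq z_def .
qed

lemma Gf_ccv:
  "(1-t) * Gf f \<mu> N x w + t * Gf f \<mu> N x w' \<le> Gf f \<mu> N x (\<lambda>k. (1-t) * w k + t * w' k)"
proof -
  have s1: "(\<Sum>k=1..N. ((1-t) * w k + t * w' k) * av f k x) = (1-t) * (\<Sum>k=1..N. w k * av f k x) + t * (\<Sum>k=1..N. w' k * av f k x)"
    unfolding sum_distrib_left sum.distrib[symmetric] by (rule sum.cong) (auto simp: algebra_simps)
  have s2: "(\<Sum>k=1..N. ((1-t) * w k + t * w' k)) = (1-t) * (\<Sum>k=1..N. w k) + t * (\<Sum>k=1..N. w' k)"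
    unfolding sum_distrib_left sum.distrib[symmetric] by (rule sum.cong) (auto simp: algebra_simps)
  show ?thesis unfolding Gf_def s1 s2 by (simp add: algebra_simps)
qed

lemma core_inst:
  assumes mu: "0 \<le> \<mu>" and ne: "D0 f \<noteq> {}"
    and hyp: "\<forall>x\<in>D0 f. \<forall>r<\<rho>. \<exists>w\<in>K0 \<mu>. \<forall>N. r < Gf f \<mu> N x w"
  shows "\<exists>w\<in>K0 \<mu>. \<forall>x\<in>D0 f. \<forall>N. \<rho> \<le> Gf f \<mu> N x w"
proof -
  interpret mm "D0 f" "K0 \<mu>" "Gf f \<mu>"
  proof
    show "compact (K0 \<mu>)" using compact_K0[OF mu] .
    show "D0 f \<noteq> {}" by fact
    show "\<And>N x. x \<in> D0 f \<Longrightarrow> continuous_on UNIV (Gf f \<mu> N x)" using Gf_cont by blast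
    show "\<And>N x w. x \<in> D0 f \<Longrightarrow> w \<in> K0 \<mu> \<Longrightarrow> Gf f \<mu> (Suc N) x w \<le> Gf f \<mu> N x w" using Gf_mono by blast
    show "\<And>x y t. x \<in> D0 f \<Longrightarrow> y \<in> D0 f \<Longrightarrow> 0 < t \<Longrightarrow> t < 1 \<Longrightarrow> (1-t) *\<^sub>R x + t *\<^sub>R y \<in> D0 f"
      using D0_conv(1) by blast
    show "\<And>x y t N w. x \<in> D0 f \<Longrightarrow> y \<in> D0 f \<Longrightarrow> 0 < t \<Longrightarrow> t < 1 \<Longrightarrow> w \<in> K0 \<mu> \<Longrightarrow>
        Gf f \<mu> N ((1-t) *\<^sub>R x + t *\<^sub>R y) w \<le> (1-t) * Gf f \<mu> N x w + t * Gf f \<mu> N y w"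
      using Gf_cvx by blast
    show "\<And>N x w w' t. x \<in> D0 f \<Longrightarrow> w \<in> K0 \<mu> \<Longrightarrow> w' \<in> K0 \<mu> \<Longrightarrow> 0 \<le> t \<Longrightarrow> t \<le> 1 \<Longrightarrow>
        (1-t) * Gf f \<mu> N x w + t * Gf f \<mu> N x w' \<le> Gf f \<mu> N x (\<lambda>k. (1-t) * w k + t * w' k)"
      using Gf_ccv by blast
  qed
  show ?thesis using main[OF cvxf_K0 hyp] .
qed

end



lemma ereal_shift_le: "ereal (r - a) \<le> Y \<Longrightarrow> ereal r \<le> ereal a + Y"
  by (cases Y) auto

lemma sum_shift1: "(w::nat\<Rightarrow>real) 0 = 0 \<Longrightarrow> (\<Sum>k<Suc n. w k) = (\<Sum>k=1..n. w k)"
  by (induction n) auto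

lemma K0_sum:
  assumes w: "w \<in> K0 \<mu>" and mu: "0 \<le> \<mu>"
  shows "summable w" "suminf w \<le> \<mu>" "(\<lambda>N. \<Sum>k=1..N. w k) \<longlonglongrightarrow> suminf w" "\<And>k. 0 \<le> w k"
proof -
  have w0: "w 0 = 0" and nn: "\<And>k. 0 \<le> w k" and ps: "\<And>n. (\<Sum>k=1..n. w k) \<le> \<mu>" using w unfolding K0_def by auto
  have le: "(\<Sum>k<n. w k) \<le> \<mu>" for n
  proof (cases n)
    case 0 then show ?thesis using mu by simp
  next
    case (Suc m) then show ?thesis using sum_shift1[of w m] w0 ps[of m] by simp
  qed
  show sw: "summable w" by (rule summableI_nonneg_bounded[OF nn le])
  show "suminf w \<le> \<mu>" by (rule suminf_le_const[OF sw le])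
  have "(\<lambda>n. \<Sum>k<Suc n. w k) \<longlonglongrightarrow> suminf w" using LIMSEQ_Suc[OF summable_LIMSEQ[OF sw]] .
  then show "(\<lambda>N. \<Sum>k=1..N. w k) \<longlonglongrightarrow> suminf w" using sum_shift1[of w] w0 by simp
  show "\<And>k. 0 \<le> w k" by (rule nn)
qed

context prob begin

lemma sv_lim:
  assumes x: "x \<in> D0 f"
  shows "(\<lambda>N. ereal (sv f N x)) \<longlonglongrightarrow> limsup (\<lambda>k. ereal (av f k x))"
    and "limsup (\<lambda>k. ereal (av f k x)) \<le> ereal (bnd x)"
proof -
  define u where "u n = (SUP m\<in>{n..}. ereal (av f m x))" for n
  have dec: "decseq u" unfolding u_def by (intro decseq_SucI SUP_subset_mono) auto
  have L: "limsup (\<lambda>k. ereal (av f k x)) = (INF n. u n)" unfolding u_def by (rule limsup_INF_SUP)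
  have "ereal (sv f N x) = u (Suc N)" for N
  proof -
    have up: "(SUP k\<in>{N<..}. ereal (av f k x)) \<le> ereal (bnd x)"
      using D0_bnd[OF x] by (intro SUP_least) auto
    have lo: "ereal (av f (Suc N) x) \<le> (SUP k\<in>{N<..}. ereal (av f k x))" by (intro SUP_upper) auto
    have "\<bar>SUP k\<in>{N<..}. ereal (av f k x)\<bar> \<noteq> \<infinity>" using up lo by auto
    then have "ereal (sv f N x) = (SUP k\<in>{N<..}. ereal (av f k x))"
      unfolding sv_def by (rule ereal_SUP)
    also have "{N<..} = {Suc N..}" by auto
    finally show ?thesis unfolding u_def .
  qed
  then show "(\<lambda>N. ereal (sv f N x)) \<longlonglongrightarrow> limsup (\<lambda>k. ereal (av f k x))"
    unfolding L using LIMSEQ_Suc[OF LIMSEQ_INF[OF dec]] by simp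
  have "u 1 \<le> ereal (bnd x)" unfolding u_def using D0_bnd[OF x] by (intro SUP_least) auto
  moreover have "(INF n. u n) \<le> u 1" by (rule INF_lower) auto
  ultimately show "limsup (\<lambda>k. ereal (av f k x)) \<le> ereal (bnd x)" unfolding L by simp
qed

lemma E1:
  assumes x: "x \<in> D0 f" and w: "w \<in> K0 \<mu>" and mu: "0 \<le> \<mu>"
    and G: "\<forall>N. r \<le> Gf f \<mu> N x w"
  shows "ereal r \<le> lagr f x w (\<mu> - suminf w)"
proof -
  define li where "li = \<mu> - suminf w"
  define P where "P n = (\<Sum>k=1..n. w k * av f k x)" for n
  define m where "m N = \<mu> - (\<Sum>k=1..N. w k)" for N
  define Lf where "Lf = limsup (\<lambda>k. ereal (av f k x))"
  have li0: "0 \<le> li" unfolding li_def using K0_sum[OF w mu] by simp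
  have wnn: "\<And>k. 0 \<le> w k" using K0_sum[OF w mu] by simp
  have m0: "0 \<le> m N" for N using w unfolding K0_def m_def by auto
  have mlim: "m \<longlonglongrightarrow> li" unfolding m_def li_def
    by (intro tendsto_diff tendsto_const K0_sum(3)[OF w mu])
  have slim: "(\<lambda>N. ereal (sv f N x)) \<longlonglongrightarrow> Lf" unfolding Lf_def by (rule sv_lim(1)[OF x])
  have Lfb: "Lf \<le> ereal (bnd x)" unfolding Lf_def by (rule sv_lim(2)[OF x])
  have finf: "f_inf f x = Lf" unfolding f_inf_def Lf_def using D0_fin[OF x] by simp
  have psum: "(\<Sum>k=1..n. emul (w k) (f k x)) = ereal (P n)" for n
    unfolding P_def emul_def using D0_fin[OF x] by simp
  have lag: "lagr f x w li = ereal (av f 0 x) + (limsup (\<lambda>n. ereal (P n)) + emul li Lf)"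
    unfolding lagr_def psum finf using D0_fin[OF x, of 0] by (simp add: add.assoc)
  have base: "ereal (r - av f 0 x) \<le> ereal (P N) + ereal (m N * sv f N x)" for N
  proof -
    have "r \<le> Gf f \<mu> N x w" using G by blast
    then have "r - av f 0 x \<le> P N + m N * sv f N x" unfolding Gf_def P_def m_def by linarith
    then show ?thesis by simp
  qed
  have "ereal (r - av f 0 x) \<le> limsup (\<lambda>N. ereal (P N) + ereal (m N * sv f N x))"
  proof -
    have "limsup (\<lambda>N::nat. ereal (r - av f 0 x)) \<le> limsup (\<lambda>N. ereal (P N) + ereal (m N * sv f N x))"
      using base by (intro Limsup_mono) auto
    then show ?thesis by (simp add: Limsup_const)
  qed
  also have "\<dots> \<le> limsup (\<lambda>N. ereal (P N)) + limsup (\<lambda>N. ereal (m N * sv f N x))"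
    by (rule ereal_limsup_add_mono)
  also have "limsup (\<lambda>N. ereal (m N * sv f N x)) \<le> emul li Lf"
  proof (cases "li = 0")
    case False
    then have "(\<lambda>N. ereal (m N) * ereal (sv f N x)) \<longlonglongrightarrow> ereal li * Lf"
      by (intro tendsto_mult_ereal) (auto simp: mlim slim)
    then have "limsup (\<lambda>N. ereal (m N * sv f N x)) = ereal li * Lf"
      by (intro lim_imp_Limsup) auto
    moreover have "emul li Lf = ereal li * Lf" unfolding emul_def using Lfb by auto
    ultimately show ?thesis by simp
  next
    case True
    define B where "B = max (bnd x) 0"
    have "limsup (\<lambda>N. ereal (m N * sv f N x)) \<le> limsup (\<lambda>N. ereal (m N * B))"
    proof (intro Limsup_mono always_eventually allI)
      fix N
      have "sv f N x \<le> B" unfolding B_def using sv_le_bnd[OF x, of N] by linarith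
      then show "ereal (m N * sv f N x) \<le> ereal (m N * B)" using m0[of N] by (simp add: mult_left_mono)
    qed
    also have "limsup (\<lambda>N. ereal (m N * B)) = 0"
    proof -
      have "(\<lambda>N. ereal (m N * B)) \<longlonglongrightarrow> ereal (li * B)"
        by (intro tendsto_ereal tendsto_mult mlim tendsto_const)
      then have "(\<lambda>N. ereal (m N * B)) \<longlonglongrightarrow> ereal 0" using True by simp
      then show ?thesis unfolding zero_ereal_def by (intro lim_imp_Limsup) auto
    qed
    also have "0 \<le> emul li Lf" unfolding emul_def using True by (auto simp: zero_ereal_def[symmetric])
    finally show ?thesis .
  qed
  finally have fin: "ereal (r - av f 0 x) \<le> limsup (\<lambda>n. ereal (P n)) + emul li Lf"
    by (simp add: add_left_mono)
  then have "ereal r \<le> ereal (av f 0 x) + (limsup (\<lambda>n. ereal (P n)) + emul li Lf)"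
    by (rule ereal_shift_le)
  then show ?thesis using lag unfolding li_def by simp
qed

end


lemma sum_le_suminf_ereal:
  fixes g :: "nat \<Rightarrow> ereal"
  assumes nn: "\<And>n. 0 \<le> g n" and B: "finite B"
  shows "sum g B \<le> suminf g"
proof -
  obtain N where N: "B \<subseteq> {..<N}" using finite_nat_bounded[OF B] by blast
  have "sum g B \<le> sum g {..<N}" by (rule sum_mono2[OF _ N]) (auto simp: nn)
  also have "\<dots> \<le> suminf g" by (rule suminf_upper[OF nn])
  finally show ?thesis .
qed

lemma limsup_infty:
  fixes u :: "nat \<Rightarrow> ereal"
  assumes "\<And>N M. \<exists>k\<ge>N. ereal M < u k"
  shows "limsup u = \<infinity>"
proof -
  have "(SUP m\<in>{n..}. u m) = \<infinity>" for n
  proof -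
    have "\<exists>i\<in>{n..}. y < u i" if "y < top" for y
    proof (cases y)
      case (real r) then show ?thesis using assms[of n r] by auto
    next
      case PInf then show ?thesis using that by (simp add: top_ereal_def)
    next
      case MInf
      obtain k where "k \<ge> n" "ereal 0 < u k" using assms[of n 0] by blast
      then show ?thesis using MInf by (intro bexI[of _ k]) auto
    qed
    then show ?thesis by (simp add: top_ereal_def[symmetric])
  qed
  then show ?thesis unfolding limsup_INF_SUP by simp
qed

context prob begin

lemma unb:
  assumes fin: "\<forall>k\<ge>1. f k x \<noteq> \<infinity>" and sup: "(SUP k\<in>{1..}. f k x) = \<infinity>"
  shows "\<exists>k\<ge>N. ereal M < f k x"
proof (rule ccontr)
  assume "\<not> ?thesis"
  then have le: "\<forall>k\<ge>N. f k x \<le> ereal M" by (auto simp: not_less)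
  define B where "B = Max (insert (ereal M) ((\<lambda>k. f k x) ` {1..<N}))"
  have finB: "finite (insert (ereal M) ((\<lambda>k. f k x) ` {1..<N}))" by simp
  have "B \<in> insert (ereal M) ((\<lambda>k. f k x) ` {1..<N})" unfolding B_def using finB by (intro Max_in) auto
  then have Bfin: "B \<noteq> \<infinity>" using fin by auto
  have "(SUP k\<in>{1..}. f k x) \<le> B"
  proof (rule SUP_least)
    fix k :: nat assume k: "k \<in> {1..}"
    show "f k x \<le> B"
    proof (cases "k < N")
      case True then show ?thesis unfolding B_def using finB k by (intro Max_ge) auto
    next
      case False
      then have "f k x \<le> ereal M" using le by auto
      also have "ereal M \<le> B" unfolding B_def using finB by (intro Max_ge) auto
      finally show ?thesis .
    qed
  qed
  with sup Bfin show False by simp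
qed

lemma E2:
  assumes x: "x \<notin> D0 f" and l: "\<And>k. 0 \<le> l k" and li: "0 \<le> li"
  shows "lagr f x l li = \<infinity>"
proof (cases "f 0 x = \<infinity>")
  case True then show ?thesis unfolding lagr_def by simp
next
  case False
  then have sup: "(SUP k\<in>{1..}. f k x) = \<infinity>" using x unfolding D0_def by (auto simp: less_top[symmetric])
  show ?thesis
  proof (cases "\<exists>k\<ge>1. f k x = \<infinity>")
    case True
    then obtain k where k: "k \<ge> 1" "f k x = \<infinity>" by blast
    have "limsup (\<lambda>n. \<Sum>j=1..n. emul (l j) (f j x)) = \<infinity>"
    proof (rule limsup_infty)
      fix N M
      have "(\<Sum>j=1..max N k. emul (l j) (f j x)) = \<infinity>"
        unfolding sum_Pinfty using k by (intro conjI bexI[of _ k]) (auto simp: emul_def)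
      then show "\<exists>n\<ge>N. ereal M < (\<Sum>j=1..n. emul (l j) (f j x))" by (intro exI[of _ "max N k"]) auto
    qed
    then show ?thesis unfolding lagr_def by simp
  next
    case False
    then have fin: "\<forall>k\<ge>1. f k x \<noteq> \<infinity>" by auto
    have "f_inf f x = \<infinity>" unfolding f_inf_def
    proof (rule limsup_infty)
      fix N M show "\<exists>k\<ge>N. ereal M < f k x" using unb[OF fin sup] by blast
    qed
    then show ?thesis unfolding lagr_def emul_def by simp
  qed
qed

lemma sum_split_at:
  fixes g :: "nat \<Rightarrow> real"
  assumes "m \<le> n" shows "(\<Sum>k=1..n. g k) = (\<Sum>k=1..m. g k) + (\<Sum>k=Suc m..n. g k)"
  using assms
proof (induction n rule: dec_induct)
  case base then show ?case by simp
next
  case (step n) then show ?case by simp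
qed

lemma emul_nonneg: "0 \<le> c \<Longrightarrow> 0 \<le> a \<Longrightarrow> 0 \<le> emul c a"
  unfolding emul_def by (cases a) auto

lemma emul_max: "emul c (max (ereal a) 0) = ereal (c * max a 0)"
  by (cases "a \<le> 0") (auto simp: emul_def max_def zero_ereal_def)

lemma PW:
  assumes l: "ell1_plus l" and li: "0 \<le> li"
  shows "lagr f x l li \<le> lagr_m f m x (\<lambda>k. if k \<le> m then l k else l k + li + (if li > 0 then 0 else 1))"
proof -
  define hat where "hat = (\<lambda>k. if k \<le> m then l k else l k + li + (if li > 0 then 0 else 1))"
  define \<gamma> where "\<gamma> = li + (if li > 0 then 0 else (1::real))"
  have g0: "0 < \<gamma>" unfolding \<gamma>_def using li by auto
  have l0: "\<And>k. 0 \<le> l k" using l unfolding ell1_plus_def by auto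
  have hl: "\<And>k. l k \<le> hat k" unfolding hat_def using li by auto
  have hg: "\<And>k. m < k \<Longrightarrow> \<gamma> \<le> hat k" unfolding hat_def \<gamma>_def using l0 by auto
  have h0: "\<And>k. 0 \<le> hat k" by (rule order_trans[OF l0 hl])
  define tm where "tm k = (if m < k then emul (hat k) (max (f k x) 0) else 0)" for k
  define T where "T = suminf tm"
  have tnn: "\<And>k. 0 \<le> tm k" unfolding tm_def using h0 by (auto intro: emul_nonneg)
  have Tge: "sum tm B \<le> T" if "finite B" for B unfolding T_def using sum_le_suminf_ereal[OF tnn that] .
  have LM: "lagr_m f m x hat = f 0 x + (\<Sum>k=1..m. emul (hat k) (f k x)) + T"
    unfolding lagr_m_def T_def tm_def by simp
  have "lagr f x l li \<le> lagr_m f m x hat"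
  proof (cases "x \<in> D0 f")
    case False
    have "lagr_m f m x hat = \<infinity>"
    proof (cases "f 0 x = \<infinity>")
      case True then show ?thesis unfolding LM by simp
    next
      case f0: False
      then have sup: "(SUP k\<in>{1..}. f k x) = \<infinity>" using False unfolding D0_def by (auto simp: less_top[symmetric])
      show ?thesis
      proof (cases "\<exists>k\<ge>1. f k x = \<infinity>")
        case True
        then obtain k where k: "k \<ge> 1" "f k x = \<infinity>" by blast
        show ?thesis
        proof (cases "k \<le> m")
          case True
          have "(\<Sum>k=1..m. emul (hat k) (f k x)) = \<infinity>"
            unfolding sum_Pinfty using k True by (intro conjI bexI[of _ k]) (auto simp: emul_def)
          then show ?thesis unfolding LM by simp
        next
          case False
          have "tm k = \<infinity>" unfolding tm_def emul_def using False k by simp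
          then have "sum tm {k} = \<infinity>" by simp
          then have "T = \<infinity>" using Tge[of "{k}"] by simp
          then show ?thesis unfolding LM by simp
        qed
      next
        case False
        then have fin: "\<forall>k\<ge>1. f k x \<noteq> \<infinity>" by auto
        have "T = \<infinity>"
        proof (rule ereal_top)
          fix M :: real
          obtain k where k: "k \<ge> Suc m" "ereal (\<bar>M\<bar> / \<gamma>) < f k x" using unb[OF fin sup] by blast
          obtain a where a: "f k x = ereal a" using fin k not_minf[of k x] by (cases "f k x") auto
          have aM: "\<bar>M\<bar> / \<gamma> < a" using k(2) a by simp
          have "M \<le> \<gamma> * (\<bar>M\<bar> / \<gamma>)" using g0 by simp
          also have "\<dots> \<le> hat k * max a 0"
            using hg[of k] k(1) aM g0 by (intro mult_mono) auto
          moreover have "tm k = ereal (hat k * max a 0)" unfolding tm_def a using k(1) emul_max by simp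
          ultimately have "ereal M \<le> tm k" by simp
          also have "tm k = sum tm {k}" by simp
          also have "\<dots> \<le> T" by (rule Tge) simp
          finally show "ereal M \<le> T" .
        qed
        then show ?thesis unfolding LM by simp
      qed
    qed
    then show ?thesis by simp
  next
    case True
    note x = True
    define a where "a k = av f k x" for k
    have fa: "\<And>k. f k x = ereal (a k)" unfolding a_def using D0_fin[OF x] .
    define Lf where "Lf = limsup (\<lambda>k. ereal (a k))"
    have finf: "f_inf f x = Lf" unfolding f_inf_def Lf_def using fa by simp
    have tmr: "tm k = (if m < k then ereal (hat k * max (a k) 0) else 0)" for k
      unfolding tm_def fa emul_max by simp
    show ?thesis
    proof (cases "0 < Lf")
      case True
      have Lfb: "Lf \<le> ereal (bnd x)" unfolding Lf_def a_def by (rule sv_lim(2)[OF x])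
      obtain d2 where d2: "Lf = ereal d2"
      proof (cases Lf)
        case (real r) then show ?thesis using that by blast
      next
        case PInf then show ?thesis using Lfb by simp
      next
        case MInf then show ?thesis using True by simp
      qed
      define \<delta> where "\<delta> = d2 / 2"
      have d0: "0 < \<delta>" unfolding \<delta>_def using True d2 by simp
      have dL: "ereal \<delta> < Lf" unfolding \<delta>_def using True d2 by simp
      have freq: "\<exists>k\<ge>n. \<delta> < a k" for n
      proof -
        have "Lf \<le> (SUP k\<in>{n..}. ereal (a k))" unfolding Lf_def limsup_INF_SUP by (rule INF_lower) simp
        with dL have "ereal \<delta> < (SUP k\<in>{n..}. ereal (a k))" by (rule order.strict_trans2)
        then obtain k where "k \<in> {n..}" "ereal \<delta> < ereal (a k)" unfolding less_SUP_iff ..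
        then show ?thesis by auto
      qed
      define S where "S = {k. m < k \<and> \<delta> < a k}"
      have infS: "infinite S" unfolding infinite_nat_iff_unbounded_le
      proof
        fix n
        obtain k where "k \<ge> max n (Suc m)" "\<delta> < a k" using freq by blast
        then show "\<exists>k\<ge>n. k \<in> S" unfolding S_def by auto
      qed
      have "T = \<infinity>"
      proof (rule ereal_top)
        fix M :: real
        define n where "n = nat \<lceil>\<bar>M\<bar> / (\<gamma> * \<delta>)\<rceil>"
        obtain B where B: "finite B" "card B = n" "B \<subseteq> S" using infinite_arbitrarily_large[OF infS] by blast
        have "real n * (\<gamma> * \<delta>) \<le> (\<Sum>k\<in>B. hat k * max (a k) 0)"
        proof -
          have "\<gamma> * \<delta> \<le> hat k * max (a k) 0" if "k \<in> B" for k
          proof -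
            have kS: "m < k" "\<delta> < a k" using that B(3) unfolding S_def by auto
            have "\<gamma> \<le> hat k" using hg kS(1) by blast
            moreover have "\<delta> \<le> max (a k) 0" using kS(2) by linarith
            ultimately show ?thesis using g0 d0 by (intro mult_mono) auto
          qed
          then have "of_nat (card B) * (\<gamma> * \<delta>) \<le> (\<Sum>k\<in>B. hat k * max (a k) 0)"
            by (rule sum_bounded_below)
          then show ?thesis using B(2) by simp
        qed
        moreover have "M \<le> real n * (\<gamma> * \<delta>)"
        proof -
          have gd: "0 < \<gamma> * \<delta>" using g0 d0 by simp
          have "\<bar>M\<bar> / (\<gamma> * \<delta>) \<le> real n" unfolding n_def by linarith
          then have "\<bar>M\<bar> \<le> real n * (\<gamma> * \<delta>)" using gd by (simp add: divide_le_eq)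
          then show ?thesis by linarith
        qed
        ultimately have "ereal M \<le> ereal (\<Sum>k\<in>B. hat k * max (a k) 0)" by simp
        also have "\<dots> = sum tm B"
        proof -
          have "sum tm B = (\<Sum>k\<in>B. ereal (hat k * max (a k) 0))"
          proof (rule sum.cong)
            fix k assume "k \<in> B"
            then have "m < k" using B(3) unfolding S_def by auto
            then show "tm k = ereal (hat k * max (a k) 0)" unfolding tmr by simp
          qed simp
          then show ?thesis by simp
        qed
        also have "\<dots> \<le> T" by (rule Tge[OF B(1)])
        finally show "ereal M \<le> T" .
      qed
      then show ?thesis unfolding LM by simp
    next
      case False
      define s where "s = (\<Sum>k=1..m. l k * a k)"
      have E: "emul li Lf \<le> 0"
      proof -
        have "Lf \<noteq> \<infinity>" using False by auto
        then have "emul li Lf = ereal li * Lf" unfolding emul_def by simp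
        also have "\<dots> \<le> 0" using False li by (cases Lf) (auto simp: mult_nonneg_nonpos)
        finally show ?thesis .
      qed
      have ps: "(\<Sum>k=1..n. emul (l k) (f k x)) = ereal (\<Sum>k=1..n. l k * a k)" for n
        unfolding emul_def fa by simp
      have "limsup (\<lambda>n. \<Sum>k=1..n. emul (l k) (f k x)) \<le> ereal s + T"
      proof (rule Limsup_bounded, unfold eventually_sequentially, intro exI allI impI)
        fix n assume mn: "m \<le> n"
        have "(\<Sum>k=1..n. l k * a k) = s + (\<Sum>k=Suc m..n. l k * a k)"
          unfolding s_def by (rule sum_split_at[OF mn])
        also have "(\<Sum>k=Suc m..n. l k * a k) \<le> (\<Sum>k=Suc m..n. hat k * max (a k) 0)"
        proof (rule sum_mono)
          fix k assume "k \<in> {Suc m..n}"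
          have "l k * a k \<le> l k * max (a k) 0" using l0[of k] by (intro mult_left_mono) auto
          also have "\<dots> \<le> hat k * max (a k) 0" using hl[of k] by (intro mult_right_mono) auto
          finally show "l k * a k \<le> hat k * max (a k) 0" .
        qed
        also have "(\<Sum>k=Suc m..n. hat k * max (a k) 0) = (\<Sum>k<Suc n. if m < k then hat k * max (a k) 0 else 0)"
        proof -
          have "{k\<in>{..<Suc n}. m < k} = {Suc m..n}" by auto
          then show ?thesis using sum.inter_filter[of "{..<Suc n}" "\<lambda>k. hat k * max (a k) 0" "\<lambda>k. m < k"] by simp
        qed
        finally have r: "(\<Sum>k=1..n. l k * a k) \<le> s + (\<Sum>k<Suc n. if m < k then hat k * max (a k) 0 else 0)"
          by simp
        have "sum tm {..<Suc n} = (\<Sum>k<Suc n. ereal (if m < k then hat k * max (a k) 0 else 0))"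
          unfolding tmr by (intro sum.cong) (auto simp: zero_ereal_def)
        then have "ereal (\<Sum>k<Suc n. if m < k then hat k * max (a k) 0 else 0) = sum tm {..<Suc n}"
          by simp
        also have "\<dots> \<le> T" by (rule Tge) simp
        finally have "ereal (\<Sum>k<Suc n. if m < k then hat k * max (a k) 0 else 0) \<le> T" .
        then have "ereal s + ereal (\<Sum>k<Suc n. if m < k then hat k * max (a k) 0 else 0) \<le> ereal s + T"
          by (rule add_left_mono)
        moreover have "ereal (\<Sum>k=1..n. l k * a k) \<le> ereal s + ereal (\<Sum>k<Suc n. if m < k then hat k * max (a k) 0 else 0)"
          using r by simp
        ultimately show "(\<Sum>k=1..n. emul (l k) (f k x)) \<le> ereal s + T" unfolding ps
          by (rule order_trans[rotated])
      qed
      then have "lagr f x l li \<le> ereal (a 0) + (ereal s + T) + 0"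
        unfolding lagr_def finf using E fa[of 0] by (intro add_mono) auto
      also have "\<dots> = lagr_m f m x hat"
      proof -
        have "(\<Sum>k=1..m. emul (hat k) (f k x)) = ereal s"
          unfolding s_def emul_def fa hat_def by simp
        then have "lagr_m f m x hat = ereal (a 0) + ereal s + T" unfolding LM fa by simp
        moreover have "ereal (a 0) + (ereal s + T) = ereal (a 0) + ereal s + T" by (rule add.assoc[symmetric])
        ultimately show ?thesis by simp
      qed
      finally show ?thesis .
    qed
  qed
  then show ?thesis unfolding hat_def .
qed

end


context prob begin

lemma sv_ereal:
  assumes x: "x \<in> D0 f" shows "ereal (sv f N x) = (SUP k\<in>{N<..}. ereal (av f k x))"
proof -
  have up: "(SUP k\<in>{N<..}. ereal (av f k x)) \<le> ereal (bnd x)"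
    using D0_bnd[OF x] by (intro SUP_least) auto
  have lo: "ereal (av f (Suc N) x) \<le> (SUP k\<in>{N<..}. ereal (av f k x))" by (intro SUP_upper) auto
  have "\<bar>SUP k\<in>{N<..}. ereal (av f k x)\<bar> \<noteq> \<infinity>" using up lo by auto
  then show ?thesis unfolding sv_def by (rule ereal_SUP)
qed

lemma hat_ellinf:
  assumes l: "ell1_plus l" and li: "0 \<le> li"
  shows "ellinf_plus (\<lambda>k. if k \<le> m then l k else l k + li + (if li > 0 then 0 else 1))"
proof -
  have l0: "\<And>k. 0 \<le> l k" and sl: "summable l" using l unfolding ell1_plus_def by auto
  have lk: "l k \<le> suminf l" for k
  proof -
    have "sum l {k} \<le> suminf l" by (rule sum_le_suminf[OF sl]) (auto simp: l0)
    then show ?thesis by simp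
  qed
  define B where "B = suminf l + li + 1"
  define h where "h = (\<lambda>k. if k \<le> m then l k else l k + li + (if li > 0 then 0 else (1::real)))"
  have hb: "\<bar>h k\<bar> \<le> B" for k
    using lk[of k] l0[of k] li unfolding B_def h_def by auto
  have "bounded (range h)"
    unfolding bounded_iff using hb by auto
  moreover have "0 \<le> h k" for k unfolding h_def using l0[of k] li by auto
  ultimately show ?thesis unfolding ellinf_plus_def h_def by auto
qed

lemma vD_le_vDm: "vD f \<le> vDm f m"
  unfolding vD_def
proof (rule SUP_least)
  fix p :: "(nat \<Rightarrow> real) \<times> real" assume "p \<in> {(l, linf). ell1_plus l \<and> 0 \<le> linf}"
  then obtain l and li :: real where p: "p = (l, li)" "ell1_plus l" "0 \<le> li" by auto
  define hat where "hat = (\<lambda>k. if k \<le> m then l k else l k + li + (if li > 0 then 0 else (1::real)))"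
  have "(INF x. lagr f x (fst p) (snd p)) \<le> (INF x. lagr_m f m x hat)"
  proof (rule INF_mono)
    fix x show "\<exists>y\<in>UNIV. lagr f y (fst p) (snd p) \<le> lagr_m f m x hat"
      unfolding p fst_conv snd_conv hat_def using PW[OF p(2,3), of x m] by blast
  qed
  also have "\<dots> \<le> vDm f m" unfolding vDm_def
    using hat_ellinf[OF p(2,3), of m] unfolding hat_def by (intro SUP_upper) auto
  finally show "(INF x. lagr f x (fst p) (snd p)) \<le> vDm f m" .
qed

lemma lagr_m_feas:
  assumes l: "\<And>k. 0 \<le> l k" and feas: "\<forall>k\<ge>1. f k x \<le> 0"
  shows "lagr_m f m x l \<le> f 0 x"
proof -
  have fk: "emul (l k) (f k x) \<le> 0" if "k \<in> {1..m}" for k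
  proof -
    have le: "f k x \<le> 0" using feas that by auto
    then obtain a where a: "f k x = ereal a" using not_minf[of k x] by (cases "f k x") auto
    then have "a \<le> 0" using le by simp
    then show ?thesis unfolding emul_def a using l[of k] by (simp add: mult_nonneg_nonpos)
  qed
  have s: "(\<Sum>k=1..m. emul (l k) (f k x)) \<le> 0" by (rule sum_nonpos) (use fk in auto)
  have t: "(\<lambda>k. if m < k then emul (l k) (max (f k x) 0) else 0) = (\<lambda>k. 0)"
  proof
    fix k
    show "(if m < k then emul (l k) (max (f k x) 0) else 0) = 0"
    proof (cases "m < k")
      case True
      then have "f k x \<le> 0" using feas by auto
      then have "max (f k x) 0 = 0" by (simp add: max_def)
      then show ?thesis unfolding emul_def by simp
    qed simp
  qed
  have "lagr_m f m x l = f 0 x + (\<Sum>k=1..m. emul (l k) (f k x))" unfolding lagr_m_def t by simp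
  also have "\<dots> \<le> f 0 x + 0" using s by (rule add_left_mono)
  finally show ?thesis by simp
qed

lemma vDm_le_vP: "vDm f m \<le> valfun f 0"
  unfolding vDm_def
proof (rule SUP_least)
  fix l assume "l \<in> {l. ellinf_plus l}"
  then have l0: "\<And>k. 0 \<le> l k" unfolding ellinf_plus_def by auto
  show "(INF x. lagr_m f m x l) \<le> valfun f 0" unfolding valfun_def
  proof (rule Inf_greatest)
    fix y assume "y \<in> {f 0 x | x. \<forall>k\<ge>1. f k x \<le> ereal 0}"
    then obtain x where x: "y = f 0 x" "\<forall>k\<ge>1. f k x \<le> 0" by (auto simp: zero_ereal_def)
    have "(INF x. lagr_m f m x l) \<le> lagr_m f m x l" by (rule INF_lower) simp
    also have "\<dots> \<le> f 0 x" by (rule lagr_m_feas[OF l0 x(2)])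
    finally show "(INF x. lagr_m f m x l) \<le> y" using x(1) by simp
  qed
qed

lemma dual_lb:
  assumes mu: "0 \<le> \<mu>" and ne: "D0 f \<noteq> {}"
    and hyp: "\<forall>x\<in>D0 f. \<rho> \<le> av f 0 x + \<mu> * sv f 0 x"
  shows "\<exists>l li. ell1_plus l \<and> 0 \<le> li \<and> (\<forall>x. ereal \<rho> \<le> lagr f x l li)"
proof -
  have H: "\<forall>x\<in>D0 f. \<forall>r<\<rho>. \<exists>w\<in>K0 \<mu>. \<forall>N. r < Gf f \<mu> N x w"
  proof (intro ballI allI impI)
    fix x r assume x: "x \<in> D0 f" and r: "r < \<rho>"
    have "\<exists>k\<ge>1. r < av f 0 x + \<mu> * av f k x"
    proof (cases "\<mu> = 0")
      case True then show ?thesis using hyp x r by (intro exI[of _ 1]) auto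
    next
      case False
      then have mp: "0 < \<mu>" using mu by simp
      have "\<rho> \<le> av f 0 x + \<mu> * sv f 0 x" using hyp x by blast
      then have "r - av f 0 x < \<mu> * sv f 0 x" using r by linarith
      then have "(r - av f 0 x) / \<mu> < sv f 0 x" using mp by (simp add: divide_less_eq mult.commute)
      then obtain k where k: "k \<in> {0<..}" "(r - av f 0 x) / \<mu> < av f k x"
        unfolding sv_def using less_cSUP_iff[of "{0<..}" "\<lambda>k. av f k x"] bdd_sv[OF x, of 0] by auto
      then have "r < av f 0 x + \<mu> * av f k x" using mp by (simp add: divide_less_eq algebra_simps)
      then show ?thesis using k by (intro exI[of _ k]) auto
    qed
    then obtain k where k: "k \<ge> 1" "r < av f 0 x + \<mu> * av f k x" by blast
    define w where "w = (\<lambda>j. if j = k then \<mu> else (0::real))"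
    have sw: "(\<Sum>j=1..n. w j) = (if k \<le> n then \<mu> else 0)" for n
      unfolding w_def using k(1) by (simp add: sum.delta)
    have swa: "(\<Sum>j=1..n. w j * av f j x) = (if k \<le> n then \<mu> * av f k x else 0)" for n
    proof -
      have "(\<Sum>j=1..n. w j * av f j x) = (\<Sum>j=1..n. if j = k then \<mu> * av f j x else 0)"
        by (rule sum.cong) (auto simp: w_def)
      then show ?thesis using k(1) by (simp add: sum.delta)
    qed
    have wK: "w \<in> K0 \<mu>" unfolding K0_def using k(1) mu sw unfolding w_def by auto
    have "\<forall>N. r < Gf f \<mu> N x w"
    proof
      fix N
      show "r < Gf f \<mu> N x w"
      proof (cases "k \<le> N")
        case True then show ?thesis unfolding Gf_def swa sw using k by simp
      next
        case False
        then have "av f k x \<le> sv f N x" using av_le_sv[OF x, of N k] by simp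
        then have "\<mu> * av f k x \<le> \<mu> * sv f N x" using mu by (rule mult_left_mono)
        then show ?thesis unfolding Gf_def swa sw using k False by simp
      qed
    qed
    with wK show "\<exists>w\<in>K0 \<mu>. \<forall>N. r < Gf f \<mu> N x w" by blast
  qed
  obtain w where w: "w \<in> K0 \<mu>" "\<forall>x\<in>D0 f. \<forall>N. \<rho> \<le> Gf f \<mu> N x w"
    using core_inst[OF mu ne H] by blast
  have ws: "summable w" "suminf w \<le> \<mu>" "\<And>k. 0 \<le> w k" using K0_sum[OF w(1) mu] by auto
  have "ell1_plus w" unfolding ell1_plus_def using ws by auto
  moreover have "0 \<le> \<mu> - suminf w" using ws by simp
  moreover have "\<forall>x. ereal \<rho> \<le> lagr f x w (\<mu> - suminf w)"
  proof
    fix x show "ereal \<rho> \<le> lagr f x w (\<mu> - suminf w)"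
    proof (cases "x \<in> D0 f")
      case True then show ?thesis using E1[OF True w(1) mu] w(2) by blast
    next
      case False then show ?thesis using E2[OF False ws(3)] ws(2) by simp
    qed
  qed
  ultimately show ?thesis by blast
qed

lemma lagr_le_vD:
  assumes "ell1_plus l" "0 \<le> li" shows "(INF x. lagr f x l li) \<le> vD f"
  unfolding vD_def using assms by (intro SUP_upper2[of "(l, li)"]) auto

lemma D0_feas: "f 0 x < \<infinity> \<Longrightarrow> \<forall>k\<ge>1. f k x \<le> ereal b \<Longrightarrow> x \<in> D0 f"
proof -
  assume a: "f 0 x < \<infinity>" "\<forall>k\<ge>1. f k x \<le> ereal b"
  have "(SUP k\<in>{1..}. f k x) \<le> ereal b" using a(2) by (intro SUP_least) auto
  then have "(SUP k\<in>{1..}. f k x) < \<infinity>" by (rule order.strict_trans1) simp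
  with a(1) show ?thesis unfolding D0_def by auto
qed

lemma feas_of_sv: "x \<in> D0 f \<Longrightarrow> sv f 0 x \<le> b \<Longrightarrow> \<forall>k\<ge>1. f k x \<le> ereal b"
proof (intro allI impI)
  fix k :: nat assume x: "x \<in> D0 f" "sv f 0 x \<le> b" and k: "1 \<le> k"
  have "av f k x \<le> sv f 0 x" using av_le_sv[OF x(1), of 0 k] k by simp
  then show "f k x \<le> ereal b" using D0_fin[OF x(1), of k] x(2) by simp
qed

lemma H1:
  assumes C: "\<exists>x. f 0 x < \<infinity> \<and> (\<forall>k\<ge>1. f k x \<le> 0)" and eps: "0 < \<epsilon>"
  shows "valfun f \<epsilon> \<le> vD f"
proof (rule ccontr)
  assume "\<not> ?thesis"
  then have "vD f < valfun f \<epsilon>" by simp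
  then obtain r where r: "vD f < ereal r" "ereal r < valfun f \<epsilon>" using ereal_dense2 by blast
  obtain xc where xc: "f 0 xc < \<infinity>" "\<forall>k\<ge>1. f k xc \<le> ereal 0" using C by (auto simp: zero_ereal_def)
  have xcD: "xc \<in> D0 f" by (rule D0_feas[OF xc])
  have svc: "sv f 0 xc \<le> 0" unfolding sv_def
  proof (rule cSUP_least)
    fix k :: nat assume "k \<in> {0<..}"
    then have "f k xc \<le> ereal 0" using xc(2) by auto
    then show "av f k xc \<le> 0" using D0_fin[OF xcD, of k] by simp
  qed simp
  have "\<exists>\<mu>\<ge>0. \<forall>x\<in>D0 f. r \<le> av f 0 x + \<mu> * (sv f 0 x - \<epsilon>)"
  proof (rule slater_mult[where xb = xc])
    show "\<And>x y t. x \<in> D0 f \<Longrightarrow> y \<in> D0 f \<Longrightarrow> 0 < t \<Longrightarrow> t < 1 \<Longrightarrow>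
      (1-t) *\<^sub>R x + t *\<^sub>R y \<in> D0 f \<and> av f 0 ((1-t) *\<^sub>R x + t *\<^sub>R y) \<le> (1-t) * av f 0 x + t * av f 0 y
      \<and> sv f 0 ((1-t) *\<^sub>R x + t *\<^sub>R y) \<le> (1-t) * sv f 0 x + t * sv f 0 y"
      using D0_conv by blast
    show "xc \<in> D0 f" by fact
    show "sv f 0 xc < \<epsilon>" using svc eps by simp
    fix x assume x: "x \<in> D0 f" "sv f 0 x \<le> \<epsilon>"
    have "valfun f \<epsilon> \<le> f 0 x" unfolding valfun_def using feas_of_sv[OF x] by (intro Inf_lower) auto
    with r(2) have "ereal r < f 0 x" by simp
    then show "r \<le> av f 0 x" using D0_fin[OF x(1), of 0] by simp
  qed
  then obtain \<mu> where mu: "0 \<le> \<mu>" "\<forall>x\<in>D0 f. r \<le> av f 0 x + \<mu> * (sv f 0 x - \<epsilon>)" by blast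
  have "\<forall>x\<in>D0 f. r \<le> av f 0 x + \<mu> * sv f 0 x"
  proof
    fix x assume "x \<in> D0 f"
    then have "r \<le> av f 0 x + \<mu> * (sv f 0 x - \<epsilon>)" using mu by blast
    moreover have "0 \<le> \<mu> * \<epsilon>" using mu eps by simp
    ultimately show "r \<le> av f 0 x + \<mu> * sv f 0 x" by (simp add: algebra_simps)
  qed
  then obtain l li where l: "ell1_plus l" "0 \<le> li" "\<forall>x. ereal r \<le> lagr f x l li"
    using dual_lb[OF mu(1)] xcD by blast
  have "ereal r \<le> (INF x. lagr f x l li)" using l(3) by (intro INF_greatest) auto
  also have "\<dots> \<le> vD f" by (rule lagr_le_vD[OF l(1,2)])
  finally show False using r(1) by simp
qed

lemma lsc_le:
  assumes C: "\<exists>x. f 0 x < \<infinity> \<and> (\<forall>k\<ge>1. f k x \<le> 0)"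
  shows "lsc_hull (valfun f) 0 \<le> vD f"
  unfolding lsc_hull_def
proof (rule Sup_least)
  fix y assume "y \<in> {g 0 |g. lsc g \<and> (\<forall>y. g y \<le> valfun f y)}"
  then obtain g where g: "y = g 0" "lsc g" "\<forall>y. g y \<le> valfun f y" by auto
  have "g 0 \<le> Liminf (at 0) g" using g(2) unfolding lsc_def by blast
  also have "\<dots> \<le> vD f" unfolding Liminf_def
  proof (rule SUP_least)
    fix P assume "P \<in> {P. eventually P (at (0::real))}"
    then obtain d where d: "0 < d" "\<forall>x. x \<noteq> 0 \<and> dist x 0 < d \<longrightarrow> P x"
      unfolding eventually_at by auto
    have "P (d/2)" using d by auto
    then have "Inf (g ` Collect P) \<le> g (d/2)" by (intro INF_lower) auto
    also have "\<dots> \<le> valfun f (d/2)" using g(3) by blast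
    also have "\<dots> \<le> vD f" by (rule H1[OF C]) (use d in simp)
    finally show "Inf (g ` Collect P) \<le> vD f" .
  qed
  finally show "y \<le> vD f" using g(1) by simp
qed

lemma H2:
  assumes C: "\<exists>x. f 0 x < \<infinity> \<and> (\<forall>k\<ge>1. f k x \<le> 0)" and vP: "valfun f 0 > -\<infinity>"
    and sl: "\<exists>x. f 0 x < \<infinity> \<and> (SUP k\<in>{1..}. f k x) < 0"
  shows "\<exists>l li. ell1_plus l \<and> 0 \<le> li \<and> (\<forall>x. valfun f 0 \<le> lagr f x l li)"
proof -
  obtain xc where xc: "f 0 xc < \<infinity>" "\<forall>k\<ge>1. f k xc \<le> ereal 0" using C by (auto simp: zero_ereal_def)
  have "valfun f 0 \<le> f 0 xc" unfolding valfun_def using xc(2) by (intro Inf_lower) auto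
  then have vPfin: "valfun f 0 \<noteq> \<infinity>" using xc(1) by auto
  define \<rho> where "\<rho> = real_of_ereal (valfun f 0)"
  have vPr: "valfun f 0 = ereal \<rho>" unfolding \<rho>_def using vPfin vP by (cases "valfun f 0") auto
  obtain xb where xb: "f 0 xb < \<infinity>" "(SUP k\<in>{1..}. f k xb) < 0" using sl by blast
  have "\<forall>k\<ge>1. f k xb \<le> ereal 0"
  proof (intro allI impI)
    fix k :: nat assume "1 \<le> k"
    then have "f k xb \<le> (SUP k\<in>{1..}. f k xb)" by (intro SUP_upper) auto
    then show "f k xb \<le> ereal 0" using xb(2) by (simp add: zero_ereal_def)
  qed
  then have xbD: "xb \<in> D0 f" by (rule D0_feas[OF xb(1)])
  have "ereal (sv f 0 xb) = (SUP k\<in>{0<..}. ereal (av f k xb))" by (rule sv_ereal[OF xbD])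
  also have "\<dots> = (SUP k\<in>{1..}. f k xb)"
  proof -
    have "{0::nat<..} = {1..}" by auto
    then show ?thesis using D0_fin[OF xbD] by simp
  qed
  finally have "ereal (sv f 0 xb) < ereal 0" using xb(2) by (simp add: zero_ereal_def)
  then have svb: "sv f 0 xb < 0" by simp
  have "\<exists>\<mu>\<ge>0. \<forall>x\<in>D0 f. \<rho> \<le> av f 0 x + \<mu> * (sv f 0 x - 0)"
  proof (rule slater_mult[where xb = xb])
    show "\<And>x y t. x \<in> D0 f \<Longrightarrow> y \<in> D0 f \<Longrightarrow> 0 < t \<Longrightarrow> t < 1 \<Longrightarrow>
      (1-t) *\<^sub>R x + t *\<^sub>R y \<in> D0 f \<and> av f 0 ((1-t) *\<^sub>R x + t *\<^sub>R y) \<le> (1-t) * av f 0 x + t * av f 0 y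
      \<and> sv f 0 ((1-t) *\<^sub>R x + t *\<^sub>R y) \<le> (1-t) * sv f 0 x + t * sv f 0 y"
      using D0_conv by blast
    show "xb \<in> D0 f" by fact
    show "sv f 0 xb < 0" by fact
    fix x assume x: "x \<in> D0 f" "sv f 0 x \<le> 0"
    have "valfun f 0 \<le> f 0 x" unfolding valfun_def using feas_of_sv[OF x] by (intro Inf_lower) auto
    then show "\<rho> \<le> av f 0 x" using D0_fin[OF x(1), of 0] vPr by simp
  qed
  then obtain \<mu> where mu: "0 \<le> \<mu>" "\<forall>x\<in>D0 f. \<rho> \<le> av f 0 x + \<mu> * sv f 0 x" by auto
  obtain l li where l: "ell1_plus l" "0 \<le> li" "\<forall>x. ereal \<rho> \<le> lagr f x l li"
    using dual_lb[OF mu(1) _ mu(2)] xbD by blast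
  then show ?thesis using vPr by auto
qed

end

theorem theorem3p4:
  fixes f :: "nat \<Rightarrow> 'a::banach \<Rightarrow> ereal"
  assumes proper: "\<And>k. proper_convex (f k)"
    and C_ne: "\<exists>x. f 0 x < \<infinity> \<and> (\<forall>k\<ge>1. f k x \<le> 0)"
    and vP_fin: "valfun f 0 > -\<infinity>"
  shows "(\<forall>m. lsc_hull (valfun f) 0 \<le> vD f \<and> vD f \<le> vDm f m \<and> vDm f m \<le> valfun f 0)
    \<and> ((\<exists>x. f 0 x < \<infinity> \<and> (SUP k\<in>{1..}. f k x) < 0) \<longrightarrow>
         (\<forall>m. valfun f 0 = vD f \<and> vD f = vDm f m)
       \<and> (\<exists>l linf. solD f l linf)
       \<and> (\<forall>m. \<exists>l. solDm f m l)
       \<and> (\<forall>l linf m. solD f l linf \<longrightarrow>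
            solDm f m (%k. if k \<le> m then l k
                           else l k + linf + (if linf > 0 then 0 else 1))))"
proof -
  interpret prob f by unfold_locales (rule proper)
  have part1: "\<forall>m. lsc_hull (valfun f) 0 \<le> vD f \<and> vD f \<le> vDm f m \<and> vDm f m \<le> valfun f 0"
    using lsc_le[OF C_ne] vD_le_vDm vDm_le_vP by blast
  have part2: "(\<forall>m. valfun f 0 = vD f \<and> vD f = vDm f m)
       \<and> (\<exists>l linf. solD f l linf)
       \<and> (\<forall>m. \<exists>l. solDm f m l)
       \<and> (\<forall>l linf m. solD f l linf \<longrightarrow>
            solDm f m (%k. if k \<le> m then l k
                           else l k + linf + (if linf > 0 then 0 else 1)))"
    if sl: "\<exists>x. f 0 x < \<infinity> \<and> (SUP k\<in>{1..}. f k x) < 0"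
  proof -
    obtain l0 li0 where l0: "ell1_plus l0" "0 \<le> li0" "\<forall>x. valfun f 0 \<le> lagr f x l0 li0"
      using H2[OF C_ne vP_fin sl] by blast
    have a: "valfun f 0 \<le> (INF x. lagr f x l0 li0)" using l0(3) by (intro INF_greatest) auto
    have b: "(INF x. lagr f x l0 li0) \<le> vD f" by (rule lagr_le_vD[OF l0(1,2)])
    have eqs: "valfun f 0 = vD f \<and> vD f = vDm f m" for m
      using a b vD_le_vDm[of m] vDm_le_vP[of m] by (meson order.trans antisym)
    have sol0: "solD f l0 li0" unfolding solD_def using l0(1,2) a b eqs[of 0] by auto
    have hatsol: "solDm f m (\<lambda>k. if k \<le> m then l k else l k + linf + (if linf > 0 then 0 else 1))"
      if s: "solD f l linf" for l linf m
    proof -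
      have s': "ell1_plus l" "0 \<le> linf" "(INF x. lagr f x l linf) = vD f" using s unfolding solD_def by auto
      define hat where "hat = (\<lambda>k. if k \<le> m then l k else l k + linf + (if linf > 0 then 0 else (1::real)))"
      have hE: "ellinf_plus hat" unfolding hat_def by (rule hat_ellinf[OF s'(1,2)])
      have "(INF x. lagr_m f m x hat) \<le> vDm f m" unfolding vDm_def using hE by (intro SUP_upper) auto
      moreover have "vDm f m \<le> (INF x. lagr_m f m x hat)"
      proof -
        have "vDm f m = (INF x. lagr f x l linf)" using s'(3) eqs[of m] by simp
        also have "\<dots> \<le> (INF x. lagr_m f m x hat)"
        proof (rule INF_mono)
          fix x show "\<exists>y\<in>UNIV. lagr f y l linf \<le> lagr_m f m x hat"
            unfolding hat_def using PW[OF s'(1,2), of x m] by blast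
        qed
        finally show ?thesis .
      qed
      ultimately have "(INF x. lagr_m f m x hat) = vDm f m" by (rule antisym)
      with hE show ?thesis unfolding solDm_def hat_def by simp
    qed
    show ?thesis using eqs sol0 hatsol by blast
  qed
  show ?thesis using part1 part2 by blast
qed


end
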